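(* Let $\alpha,\beta$ be parameters, $q=\alpha-\beta$, and let $\hat{\mathbf{R}}_{\alpha,\beta}:\mathbb{R}^3\times\mathbb{R}^3\to\mathbb{R}^3\times\mathbb{R}^3$, $(\mathbf{x},\mathbf{y})\mapsto(\mathbf{u},\mathbf{v})$, be the map $$\mathbf{u}=\hat k(\mathbf{x},\mathbf{y},q)\,\mathbf{x}+\big(1-\hat k(\mathbf{y},\mathbf{x},q)\big)\mathbf{y}+2q\,\hat{\mathbf{r}}(\mathbf{x},\mathbf{y},q),\quad \mathbf{v}=\big(1-\hat k(\mathbf{x},\mathbf{y},q)\big)\mathbf{x}+\hat k(\mathbf{y},\mathbf{x},q)\,\mathbf{y}-2q\,\hat{\mathbf{r}}(\mathbf{x},\mathbf{y},q),$$ where, with $\langle\mathbf{x},\mathbf{y}\rangle:=x_0y_0-x_1y_1-x_2y_2$, $$\hat k(\mathbf{x},\mathbf{y},q)=\frac{\langle\mathbf{x},\mathbf{x}\rangle-\langle\mathbf{y},\mathbf{y}\rangle+q^2}{\langle\mathbf{x}+\mathbf{y},\mathbf{x}+\mathbf{y}\rangle+q^2},\qquad \hat{\mathbf{r}}(\mathbf{x},\mathbf{y},q)=\frac{(x_1y_2-x_2y_1,\ x_0y_2-x_2y_0,\ x_1y_0-x_0y_1)}{\langle\mathbf{x}+\mathbf{y},\mathbf{x}+\mathbf{y}\rangle+q^2}.$$ For $n\ge1$ let $\mathbf{T}_n:\mathbb{R}^{6n}\to\mathbb{R}^{6n}$ be the transfer map $$\mathbf{T}_n(\mathbf{x}_1,\dots,\mathbf{x}_n,\mathbf{y}_1,\dots,\mathbf{y}_n)=(\mathbf{x}_1',\dots,\mathbf{x}_n',\mathbf{y}_2',\mathbf{y}_3',\dots,\mathbf{y}_n',\mathbf{y}_1'),\qquad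 (\mathbf{x}_i',\mathbf{y}_i')=\hat{\mathbf{R}}_{\alpha,\beta}(\mathbf{x}_i,\mathbf{y}_i),$$ and let its monodromy matrix be $$\mathbf{M}(\zeta)=\mathbf{M}_n(\mathbf{x}_1,\dots,\mathbf{x}_n,\mathbf{y}_1,\dots,\mathbf{y}_n)=\prod_{j=0}^{n-1}\mathbf{L}(\mathbf{y}_{n-j},\beta,\zeta)\,\mathbf{L}(\mathbf{x}_{n-j},\alpha,\zeta),\qquad \mathbf{L}(\mathbf{x},\alpha,\zeta)=\begin{pmatrix}\zeta+i(x_2-\alpha) & x_0+x_1\\ x_0-x_1 & \zeta-i(x_2+\alpha)\end{pmatrix}.$$ Equip $\mathbb{R}^{6n}$ with the (extended Sklyanin) Poisson bracket in which, for each of the $2n$ vectors $\mathbf{z}\in\{\mathbf{x}_1,\dots,\mathbf{x}_n,\mathbf{y}_1,\dots,\mathbf{y}_n\}$, $\{z_0,z_1\}=z_2$, $\{z_0,z_2\}=-z_1$, $\{z_1,z_2\}=-z_0$, and coordinates of different vectors Poisson commute. Then $\mathbf{T}_n$ is a Poisson map with respect to this bracket; it preserves the spectrum of the monodromy matrix $\mathbf{M}(\zeta)$, the $2n$ Casimir functions $\mathcal{C}(\mathbf{x}_i)$, $\mathcal{C}(\mathbf{y}_i)$ where $\mathcal{C}(\mathbf{z})=z_0^2-z_1^2-z_2^2$, and the three linear integrals $I_k=\sum_{i=1}^n\big((x_i)_k+(y_i)_k\big)$, $k=0,1,2$ (where $(x_i)_k$ is the $k$-th component of $\mathbf{x}_i$).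 Furthermore, $\{\operatorname{tr}\mathbf{M}(\zeta),\operatorname{tr}\mathbf{M}(\eta)\}=0$ for all $\zeta,\eta$.
   Context: Here $i=\sqrt{-1}$, $\zeta,\eta\in\mathbb{C}$ are spectral parameters, and all maps are understood generically (where denominators are nonzero). "Preserves the spectrum of $\mathbf{M}(\zeta)$" means that the eigenvalues of $\mathbf{M}(\zeta)$ computed at a point and at its image under $\mathbf{T}_n$ coincide for every $\zeta$. A Poisson map is one whose pullback preserves the Poisson bracket of functions. *)

theory Defs
  imports "HOL-Analysis.Analysis"
begin

text \<open>Points of R^{6n}: pairs (X, Y) of n-tuples of 3-vectors, indexed by a finite
  linearly ordered type 'n (so n = CARD('n) >= 1; the order gives the labels 1..n).\<close>

type_synonym 'n state = "(real^3^'n) \<times> (real^3^'n)"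

definition vec3 :: "real \<Rightarrow> real \<Rightarrow> real \<Rightarrow> real^3" where
  "vec3 a b c = (\<chi> k. if k = 0 then a else if k = 1 then b else c)"

definition mink :: "real^3 \<Rightarrow> real^3 \<Rightarrow> real" where
  "mink x y = x$0 * y$0 - x$1 * y$1 - x$2 * y$2"

definition khat :: "real^3 \<Rightarrow> real^3 \<Rightarrow> real \<Rightarrow> real" where
  "khat x y q = (mink x x - mink y y + q^2) / (mink (x + y) (x + y) + q^2)"

definition rhat :: "real^3 \<Rightarrow> real^3 \<Rightarrow> real \<Rightarrow> real^3" where
  "rhat x y q = (1 / (mink (x + y) (x + y) + q^2)) *\<^sub>R
     vec3 (x$1 * y$2 - x$2 * y$1) (x$0 * y$2 - x$2 * y$0) (x$1 * y$0 - x$0 * y$1)"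

definition Rhat :: "real \<Rightarrow> real \<Rightarrow> real^3 \<Rightarrow> real^3 \<Rightarrow> (real^3) \<times> (real^3)" where
  "Rhat \<alpha> \<beta> x y = (let q = \<alpha> - \<beta> in
     (khat x y q *\<^sub>R x + (1 - khat y x q) *\<^sub>R y + (2 * q) *\<^sub>R rhat x y q,
      (1 - khat x y q) *\<^sub>R x + khat y x q *\<^sub>R y - (2 * q) *\<^sub>R rhat x y q))"

definition csucc :: "'n::{finite,linorder} \<Rightarrow> 'n" where
  "csucc i = (if i = Max UNIV then Min UNIV else Min {j. i < j})"

definition Tmap :: "real \<Rightarrow> real \<Rightarrow> 'n::{finite,linorder} state \<Rightarrow> 'n state" where
  "Tmap \<alpha> \<beta> p = ((\<chi> i. fst (Rhat \<alpha> \<beta> (fst p $ i) (snd p $ i))),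
                   (\<chi> i. snd (Rhat \<alpha> \<beta> (fst p $ csucc i) (snd p $ csucc i))))"

text \<open>Generic points: all denominators of Rhat nonzero.\<close>
definition generic :: "real \<Rightarrow> real \<Rightarrow> 'n::finite state set" where
  "generic \<alpha> \<beta> = {p. \<forall>i. mink (fst p $ i + snd p $ i) (fst p $ i + snd p $ i) + (\<alpha> - \<beta>)^2 \<noteq> 0}"

definition Lmat :: "real^3 \<Rightarrow> real \<Rightarrow> complex \<Rightarrow> complex^2^2" where
  "Lmat x a \<zeta> = (\<chi> r c.
     if r = 0 \<and> c = 0 then \<zeta> + \<i> * (complex_of_real (x$2) - complex_of_real a)
     else if r = 0 \<and> c = 1 then complex_of_real (x$0 + x$1)
     else if r = 1 \<and> c = 0 then complex_of_real (x$0 - x$1)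
     else \<zeta> - \<i> * (complex_of_real (x$2) + complex_of_real a))"

text \<open>Monodromy matrix L(y_n)L(x_n) L(y_{n-1})L(x_{n-1}) ... L(y_1)L(x_1).\<close>
definition monodromy :: "real \<Rightarrow> real \<Rightarrow> complex \<Rightarrow> 'n::{finite,linorder} state \<Rightarrow> complex^2^2" where
  "monodromy \<alpha> \<beta> \<zeta> p =
     fold (\<lambda>i A. Lmat (snd p $ i) \<beta> \<zeta> ** Lmat (fst p $ i) \<alpha> \<zeta> ** A)
          (sorted_list_of_set (UNIV :: 'n set)) (mat 1)"

definition eigenvalues :: "complex^2^2 \<Rightarrow> complex set" where
  "eigenvalues A = {c. \<exists>v. v \<noteq> 0 \<and> A *v v = c *s v}"

definition casimir :: "real^3 \<Rightarrow> real" where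
  "casimir z = z$0^2 - z$1^2 - z$2^2"

definition lin_integral :: "3 \<Rightarrow> 'n::finite state \<Rightarrow> real" where
  "lin_integral k p = (\<Sum>i\<in>UNIV. (fst p $ i)$k + (snd p $ i)$k)"

definition Jst :: "real^3 \<Rightarrow> 3 \<Rightarrow> 3 \<Rightarrow> real" where
  "Jst z a b =
     (if a = 0 \<and> b = 1 then z$2 else if a = 1 \<and> b = 0 then - z$2
      else if a = 0 \<and> b = 2 then - z$1 else if a = 2 \<and> b = 0 then z$1
      else if a = 1 \<and> b = 2 then - z$0 else if a = 2 \<and> b = 1 then z$0 else 0)"

definition dX :: "('n::finite state \<Rightarrow> 'a::real_normed_vector) \<Rightarrow> 'n state \<Rightarrow> 'n \<Rightarrow> 3 \<Rightarrow> 'a" where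
  "dX f p i a = frechet_derivative f (at p) (axis i (axis a 1), 0)"

definition dY :: "('n::finite state \<Rightarrow> 'a::real_normed_vector) \<Rightarrow> 'n state \<Rightarrow> 'n \<Rightarrow> 3 \<Rightarrow> 'a" where
  "dY f p i a = frechet_derivative f (at p) (0, axis i (axis a 1))"

definition pbracket :: "('n::finite state \<Rightarrow> 'a::real_normed_algebra) \<Rightarrow> ('n state \<Rightarrow> 'a) \<Rightarrow> 'n state \<Rightarrow> 'a" where
  "pbracket f g p =
     (\<Sum>i\<in>UNIV. \<Sum>a\<in>UNIV. \<Sum>b\<in>UNIV.
        Jst (fst p $ i) a b *\<^sub>R (dX f p i a * dX g p i b)
      + Jst (snd p $ i) a b *\<^sub>R (dY f p i a * dY g p i b))"

definition casimir_functions :: "('n::finite state \<Rightarrow> real) set" where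
  "casimir_functions = (\<Union>i. {\<lambda>p. casimir (fst p $ i), \<lambda>p. casimir (snd p $ i)})"

end

theory Submission
  imports Defs
begin


definition wv :: "real^3 \<Rightarrow> real^3 \<Rightarrow> real^3" where
  "wv x y = vec3 (x$1 * y$2 - x$2 * y$1) (x$0 * y$2 - x$2 * y$0) (x$1 * y$0 - x$0 * y$1)"

lemma vec3_nth[simp]: "vec3 a b c $ 0 = a" "vec3 a b c $ 1 = b" "vec3 a b c $ 2 = c"
  by (simp_all add: vec3_def)

lemma three_neq[simp]: "(1::3) \<noteq> 0" "(2::3) \<noteq> 0" "(2::3) \<noteq> 1" "(0::3) \<noteq> 1" "(0::3) \<noteq> 2" "(1::3) \<noteq> 2"
  by simp_all

lemma three_eq0: "(3::3) = 0" by simp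

lemma UNIV3: "(UNIV :: 3 set) = {0,1,2}"
  using UNIV_3 three_eq0 by auto

lemma sum3: "sum f (UNIV::3 set) = f 0 + f 1 + f 2"
  unfolding UNIV3 by (simp add: add.assoc)


definition Dn :: "real^3 \<Rightarrow> real^3 \<Rightarrow> real \<Rightarrow> real" where
  "Dn x y q = mink (x+y) (x+y) + q^2"
definition NU :: "real^3 \<Rightarrow> real^3 \<Rightarrow> real \<Rightarrow> real^3" where
  "NU x y q = (mink x x - mink y y + q^2) *\<^sub>R x + (2 * mink x (x+y)) *\<^sub>R y + (2*q) *\<^sub>R wv x y"
definition NV :: "real^3 \<Rightarrow> real^3 \<Rightarrow> real \<Rightarrow> real^3" where
  "NV x y q = (2 * mink y (x+y)) *\<^sub>R x + (mink y y - mink x x + q^2) *\<^sub>R y - (2*q) *\<^sub>R wv x y"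
definition dDn :: "real^3 \<Rightarrow> real^3 \<Rightarrow> real^3 \<Rightarrow> real^3 \<Rightarrow> real" where
  "dDn x y h k = 2 * mink (x+y) (h+k)"
definition dNU :: "real^3 \<Rightarrow> real^3 \<Rightarrow> real \<Rightarrow> real^3 \<Rightarrow> real^3 \<Rightarrow> real^3" where
  "dNU x y q h k = (2 * mink x h - 2 * mink y k) *\<^sub>R x + (mink x x - mink y y + q^2) *\<^sub>R h
     + (2 * (mink h (x+y) + mink x (h+k))) *\<^sub>R y + (2 * mink x (x+y)) *\<^sub>R k + (2*q) *\<^sub>R (wv h y + wv x k)"
definition dNV :: "real^3 \<Rightarrow> real^3 \<Rightarrow> real \<Rightarrow> real^3 \<Rightarrow> real^3 \<Rightarrow> real^3" where
  "dNV x y q h k = (2 * (mink k (x+y) + mink y (h+k))) *\<^sub>R x + (2 * mink y (x+y)) *\<^sub>R h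
     + (2 * mink y k - 2 * mink x h) *\<^sub>R y + (mink y y - mink x x + q^2) *\<^sub>R k - (2*q) *\<^sub>R (wv h y + wv x k)"

definition pb :: "real^3 \<Rightarrow> real^3 \<Rightarrow> (3 \<Rightarrow> real) \<Rightarrow> (3 \<Rightarrow> real) \<Rightarrow> (3 \<Rightarrow> real) \<Rightarrow> (3 \<Rightarrow> real) \<Rightarrow> real" where
  "pb x y Fx Fy Gx Gy = (\<Sum>a\<in>UNIV. \<Sum>b\<in>UNIV. Jst x a b * Fx a * Gx b + Jst y a b * Fy a * Gy b)"

abbreviation "e3 a \<equiv> (axis a 1 :: real^3)"

definition NUx where "NUx x y q a = dNU x y q (e3 a) 0"
definition NUy where "NUy x y q a = dNU x y q 0 (e3 a)"
definition NVx where "NVx x y q a = dNV x y q (e3 a) 0"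
definition NVy where "NVy x y q a = dNV x y q 0 (e3 a)"
definition Dx where "Dx x y a = dDn x y (e3 a) 0"
definition Dy where "Dy x y a = dDn x y 0 (e3 a)"

lemmas unf = pb_def sum3 Jst_def Dn_def NU_def NV_def dNU_def dNV_def dDn_def mink_def wv_def axis_def
   NUx_def NUy_def NVx_def NVy_def Dx_def Dy_def

lemma pp_UU_00:
  "Dn x y q * pb x y (\<lambda>a. NUx x y q a $ 0) (\<lambda>a. NUy x y q a $ 0) (\<lambda>b. NUx x y q b $ 0) (\<lambda>b. NUy x y q b $ 0)
   - NU x y q $ 0 * pb x y (Dx x y) (Dy x y) (\<lambda>b. NUx x y q b $ 0) (\<lambda>b. NUy x y q b $ 0)
   - NU x y q $ 0 * pb x y (\<lambda>a. NUx x y q a $ 0) (\<lambda>a. NUy x y q a $ 0) (Dx x y) (Dy x y)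
   = (Dn x y q)^2 * Jst (NU x y q) 0 0"
  by (simp add: unf) algebra

lemma pp_UU_01:
  "Dn x y q * pb x y (\<lambda>a. NUx x y q a $ 0) (\<lambda>a. NUy x y q a $ 0) (\<lambda>b. NUx x y q b $ 1) (\<lambda>b. NUy x y q b $ 1)
   - NU x y q $ 0 * pb x y (Dx x y) (Dy x y) (\<lambda>b. NUx x y q b $ 1) (\<lambda>b. NUy x y q b $ 1)
   - NU x y q $ 1 * pb x y (\<lambda>a. NUx x y q a $ 0) (\<lambda>a. NUy x y q a $ 0) (Dx x y) (Dy x y)
   = (Dn x y q)^2 * Jst (NU x y q) 0 1"
  by (simp add: unf) algebra

lemma pp_UU_02:
  "Dn x y q * pb x y (\<lambda>a. NUx x y q a $ 0) (\<lambda>a. NUy x y q a $ 0) (\<lambda>b. NUx x y q b $ 2) (\<lambda>b. NUy x y q b $ 2)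
   - NU x y q $ 0 * pb x y (Dx x y) (Dy x y) (\<lambda>b. NUx x y q b $ 2) (\<lambda>b. NUy x y q b $ 2)
   - NU x y q $ 2 * pb x y (\<lambda>a. NUx x y q a $ 0) (\<lambda>a. NUy x y q a $ 0) (Dx x y) (Dy x y)
   = (Dn x y q)^2 * Jst (NU x y q) 0 2"
  by (simp add: unf) algebra

lemma pp_UU_10:
  "Dn x y q * pb x y (\<lambda>a. NUx x y q a $ 1) (\<lambda>a. NUy x y q a $ 1) (\<lambda>b. NUx x y q b $ 0) (\<lambda>b. NUy x y q b $ 0)
   - NU x y q $ 1 * pb x y (Dx x y) (Dy x y) (\<lambda>b. NUx x y q b $ 0) (\<lambda>b. NUy x y q b $ 0)
   - NU x y q $ 0 * pb x y (\<lambda>a. NUx x y q a $ 1) (\<lambda>a. NUy x y q a $ 1) (Dx x y) (Dy x y)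
   = (Dn x y q)^2 * Jst (NU x y q) 1 0"
  by (simp add: unf) algebra

lemma pp_UU_11:
  "Dn x y q * pb x y (\<lambda>a. NUx x y q a $ 1) (\<lambda>a. NUy x y q a $ 1) (\<lambda>b. NUx x y q b $ 1) (\<lambda>b. NUy x y q b $ 1)
   - NU x y q $ 1 * pb x y (Dx x y) (Dy x y) (\<lambda>b. NUx x y q b $ 1) (\<lambda>b. NUy x y q b $ 1)
   - NU x y q $ 1 * pb x y (\<lambda>a. NUx x y q a $ 1) (\<lambda>a. NUy x y q a $ 1) (Dx x y) (Dy x y)
   = (Dn x y q)^2 * Jst (NU x y q) 1 1"
  by (simp add: unf) algebra

lemma pp_UU_12:
  "Dn x y q * pb x y (\<lambda>a. NUx x y q a $ 1) (\<lambda>a. NUy x y q a $ 1) (\<lambda>b. NUx x y q b $ 2) (\<lambda>b. NUy x y q b $ 2)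
   - NU x y q $ 1 * pb x y (Dx x y) (Dy x y) (\<lambda>b. NUx x y q b $ 2) (\<lambda>b. NUy x y q b $ 2)
   - NU x y q $ 2 * pb x y (\<lambda>a. NUx x y q a $ 1) (\<lambda>a. NUy x y q a $ 1) (Dx x y) (Dy x y)
   = (Dn x y q)^2 * Jst (NU x y q) 1 2"
  by (simp add: unf) algebra

lemma pp_UU_20:
  "Dn x y q * pb x y (\<lambda>a. NUx x y q a $ 2) (\<lambda>a. NUy x y q a $ 2) (\<lambda>b. NUx x y q b $ 0) (\<lambda>b. NUy x y q b $ 0)
   - NU x y q $ 2 * pb x y (Dx x y) (Dy x y) (\<lambda>b. NUx x y q b $ 0) (\<lambda>b. NUy x y q b $ 0)
   - NU x y q $ 0 * pb x y (\<lambda>a. NUx x y q a $ 2) (\<lambda>a. NUy x y q a $ 2) (Dx x y) (Dy x y)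
   = (Dn x y q)^2 * Jst (NU x y q) 2 0"
  by (simp add: unf) algebra

lemma pp_UU_21:
  "Dn x y q * pb x y (\<lambda>a. NUx x y q a $ 2) (\<lambda>a. NUy x y q a $ 2) (\<lambda>b. NUx x y q b $ 1) (\<lambda>b. NUy x y q b $ 1)
   - NU x y q $ 2 * pb x y (Dx x y) (Dy x y) (\<lambda>b. NUx x y q b $ 1) (\<lambda>b. NUy x y q b $ 1)
   - NU x y q $ 1 * pb x y (\<lambda>a. NUx x y q a $ 2) (\<lambda>a. NUy x y q a $ 2) (Dx x y) (Dy x y)
   = (Dn x y q)^2 * Jst (NU x y q) 2 1"
  by (simp add: unf) algebra

lemma pp_UU_22:
  "Dn x y q * pb x y (\<lambda>a. NUx x y q a $ 2) (\<lambda>a. NUy x y q a $ 2) (\<lambda>b. NUx x y q b $ 2) (\<lambda>b. NUy x y q b $ 2)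
   - NU x y q $ 2 * pb x y (Dx x y) (Dy x y) (\<lambda>b. NUx x y q b $ 2) (\<lambda>b. NUy x y q b $ 2)
   - NU x y q $ 2 * pb x y (\<lambda>a. NUx x y q a $ 2) (\<lambda>a. NUy x y q a $ 2) (Dx x y) (Dy x y)
   = (Dn x y q)^2 * Jst (NU x y q) 2 2"
  by (simp add: unf) algebra

lemma pp_UV_00:
  "Dn x y q * pb x y (\<lambda>a. NUx x y q a $ 0) (\<lambda>a. NUy x y q a $ 0) (\<lambda>b. NVx x y q b $ 0) (\<lambda>b. NVy x y q b $ 0)
   - NU x y q $ 0 * pb x y (Dx x y) (Dy x y) (\<lambda>b. NVx x y q b $ 0) (\<lambda>b. NVy x y q b $ 0)
   - NV x y q $ 0 * pb x y (\<lambda>a. NUx x y q a $ 0) (\<lambda>a. NUy x y q a $ 0) (Dx x y) (Dy x y)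
   = 0"
  by (simp add: unf) algebra

lemma pp_UV_01:
  "Dn x y q * pb x y (\<lambda>a. NUx x y q a $ 0) (\<lambda>a. NUy x y q a $ 0) (\<lambda>b. NVx x y q b $ 1) (\<lambda>b. NVy x y q b $ 1)
   - NU x y q $ 0 * pb x y (Dx x y) (Dy x y) (\<lambda>b. NVx x y q b $ 1) (\<lambda>b. NVy x y q b $ 1)
   - NV x y q $ 1 * pb x y (\<lambda>a. NUx x y q a $ 0) (\<lambda>a. NUy x y q a $ 0) (Dx x y) (Dy x y)
   = 0"
  by (simp add: unf) algebra

lemma pp_UV_02:
  "Dn x y q * pb x y (\<lambda>a. NUx x y q a $ 0) (\<lambda>a. NUy x y q a $ 0) (\<lambda>b. NVx x y q b $ 2) (\<lambda>b. NVy x y q b $ 2)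
   - NU x y q $ 0 * pb x y (Dx x y) (Dy x y) (\<lambda>b. NVx x y q b $ 2) (\<lambda>b. NVy x y q b $ 2)
   - NV x y q $ 2 * pb x y (\<lambda>a. NUx x y q a $ 0) (\<lambda>a. NUy x y q a $ 0) (Dx x y) (Dy x y)
   = 0"
  by (simp add: unf) algebra

lemma pp_UV_10:
  "Dn x y q * pb x y (\<lambda>a. NUx x y q a $ 1) (\<lambda>a. NUy x y q a $ 1) (\<lambda>b. NVx x y q b $ 0) (\<lambda>b. NVy x y q b $ 0)
   - NU x y q $ 1 * pb x y (Dx x y) (Dy x y) (\<lambda>b. NVx x y q b $ 0) (\<lambda>b. NVy x y q b $ 0)
   - NV x y q $ 0 * pb x y (\<lambda>a. NUx x y q a $ 1) (\<lambda>a. NUy x y q a $ 1) (Dx x y) (Dy x y)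
   = 0"
  by (simp add: unf) algebra

lemma pp_UV_11:
  "Dn x y q * pb x y (\<lambda>a. NUx x y q a $ 1) (\<lambda>a. NUy x y q a $ 1) (\<lambda>b. NVx x y q b $ 1) (\<lambda>b. NVy x y q b $ 1)
   - NU x y q $ 1 * pb x y (Dx x y) (Dy x y) (\<lambda>b. NVx x y q b $ 1) (\<lambda>b. NVy x y q b $ 1)
   - NV x y q $ 1 * pb x y (\<lambda>a. NUx x y q a $ 1) (\<lambda>a. NUy x y q a $ 1) (Dx x y) (Dy x y)
   = 0"
  by (simp add: unf) algebra

lemma pp_UV_12:
  "Dn x y q * pb x y (\<lambda>a. NUx x y q a $ 1) (\<lambda>a. NUy x y q a $ 1) (\<lambda>b. NVx x y q b $ 2) (\<lambda>b. NVy x y q b $ 2)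
   - NU x y q $ 1 * pb x y (Dx x y) (Dy x y) (\<lambda>b. NVx x y q b $ 2) (\<lambda>b. NVy x y q b $ 2)
   - NV x y q $ 2 * pb x y (\<lambda>a. NUx x y q a $ 1) (\<lambda>a. NUy x y q a $ 1) (Dx x y) (Dy x y)
   = 0"
  by (simp add: unf) algebra

lemma pp_UV_20:
  "Dn x y q * pb x y (\<lambda>a. NUx x y q a $ 2) (\<lambda>a. NUy x y q a $ 2) (\<lambda>b. NVx x y q b $ 0) (\<lambda>b. NVy x y q b $ 0)
   - NU x y q $ 2 * pb x y (Dx x y) (Dy x y) (\<lambda>b. NVx x y q b $ 0) (\<lambda>b. NVy x y q b $ 0)
   - NV x y q $ 0 * pb x y (\<lambda>a. NUx x y q a $ 2) (\<lambda>a. NUy x y q a $ 2) (Dx x y) (Dy x y)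
   = 0"
  by (simp add: unf) algebra

lemma pp_UV_21:
  "Dn x y q * pb x y (\<lambda>a. NUx x y q a $ 2) (\<lambda>a. NUy x y q a $ 2) (\<lambda>b. NVx x y q b $ 1) (\<lambda>b. NVy x y q b $ 1)
   - NU x y q $ 2 * pb x y (Dx x y) (Dy x y) (\<lambda>b. NVx x y q b $ 1) (\<lambda>b. NVy x y q b $ 1)
   - NV x y q $ 1 * pb x y (\<lambda>a. NUx x y q a $ 2) (\<lambda>a. NUy x y q a $ 2) (Dx x y) (Dy x y)
   = 0"
  by (simp add: unf) algebra

lemma pp_UV_22:
  "Dn x y q * pb x y (\<lambda>a. NUx x y q a $ 2) (\<lambda>a. NUy x y q a $ 2) (\<lambda>b. NVx x y q b $ 2) (\<lambda>b. NVy x y q b $ 2)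
   - NU x y q $ 2 * pb x y (Dx x y) (Dy x y) (\<lambda>b. NVx x y q b $ 2) (\<lambda>b. NVy x y q b $ 2)
   - NV x y q $ 2 * pb x y (\<lambda>a. NUx x y q a $ 2) (\<lambda>a. NUy x y q a $ 2) (Dx x y) (Dy x y)
   = 0"
  by (simp add: unf) algebra

lemma pp_VU_00:
  "Dn x y q * pb x y (\<lambda>a. NVx x y q a $ 0) (\<lambda>a. NVy x y q a $ 0) (\<lambda>b. NUx x y q b $ 0) (\<lambda>b. NUy x y q b $ 0)
   - NV x y q $ 0 * pb x y (Dx x y) (Dy x y) (\<lambda>b. NUx x y q b $ 0) (\<lambda>b. NUy x y q b $ 0)
   - NU x y q $ 0 * pb x y (\<lambda>a. NVx x y q a $ 0) (\<lambda>a. NVy x y q a $ 0) (Dx x y) (Dy x y)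
   = 0"
  by (simp add: unf) algebra

lemma pp_VU_01:
  "Dn x y q * pb x y (\<lambda>a. NVx x y q a $ 0) (\<lambda>a. NVy x y q a $ 0) (\<lambda>b. NUx x y q b $ 1) (\<lambda>b. NUy x y q b $ 1)
   - NV x y q $ 0 * pb x y (Dx x y) (Dy x y) (\<lambda>b. NUx x y q b $ 1) (\<lambda>b. NUy x y q b $ 1)
   - NU x y q $ 1 * pb x y (\<lambda>a. NVx x y q a $ 0) (\<lambda>a. NVy x y q a $ 0) (Dx x y) (Dy x y)
   = 0"
  by (simp add: unf) algebra

lemma pp_VU_02:
  "Dn x y q * pb x y (\<lambda>a. NVx x y q a $ 0) (\<lambda>a. NVy x y q a $ 0) (\<lambda>b. NUx x y q b $ 2) (\<lambda>b. NUy x y q b $ 2)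
   - NV x y q $ 0 * pb x y (Dx x y) (Dy x y) (\<lambda>b. NUx x y q b $ 2) (\<lambda>b. NUy x y q b $ 2)
   - NU x y q $ 2 * pb x y (\<lambda>a. NVx x y q a $ 0) (\<lambda>a. NVy x y q a $ 0) (Dx x y) (Dy x y)
   = 0"
  by (simp add: unf) algebra

lemma pp_VU_10:
  "Dn x y q * pb x y (\<lambda>a. NVx x y q a $ 1) (\<lambda>a. NVy x y q a $ 1) (\<lambda>b. NUx x y q b $ 0) (\<lambda>b. NUy x y q b $ 0)
   - NV x y q $ 1 * pb x y (Dx x y) (Dy x y) (\<lambda>b. NUx x y q b $ 0) (\<lambda>b. NUy x y q b $ 0)
   - NU x y q $ 0 * pb x y (\<lambda>a. NVx x y q a $ 1) (\<lambda>a. NVy x y q a $ 1) (Dx x y) (Dy x y)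
   = 0"
  by (simp add: unf) algebra

lemma pp_VU_11:
  "Dn x y q * pb x y (\<lambda>a. NVx x y q a $ 1) (\<lambda>a. NVy x y q a $ 1) (\<lambda>b. NUx x y q b $ 1) (\<lambda>b. NUy x y q b $ 1)
   - NV x y q $ 1 * pb x y (Dx x y) (Dy x y) (\<lambda>b. NUx x y q b $ 1) (\<lambda>b. NUy x y q b $ 1)
   - NU x y q $ 1 * pb x y (\<lambda>a. NVx x y q a $ 1) (\<lambda>a. NVy x y q a $ 1) (Dx x y) (Dy x y)
   = 0"
  by (simp add: unf) algebra

lemma pp_VU_12:
  "Dn x y q * pb x y (\<lambda>a. NVx x y q a $ 1) (\<lambda>a. NVy x y q a $ 1) (\<lambda>b. NUx x y q b $ 2) (\<lambda>b. NUy x y q b $ 2)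
   - NV x y q $ 1 * pb x y (Dx x y) (Dy x y) (\<lambda>b. NUx x y q b $ 2) (\<lambda>b. NUy x y q b $ 2)
   - NU x y q $ 2 * pb x y (\<lambda>a. NVx x y q a $ 1) (\<lambda>a. NVy x y q a $ 1) (Dx x y) (Dy x y)
   = 0"
  by (simp add: unf) algebra

lemma pp_VU_20:
  "Dn x y q * pb x y (\<lambda>a. NVx x y q a $ 2) (\<lambda>a. NVy x y q a $ 2) (\<lambda>b. NUx x y q b $ 0) (\<lambda>b. NUy x y q b $ 0)
   - NV x y q $ 2 * pb x y (Dx x y) (Dy x y) (\<lambda>b. NUx x y q b $ 0) (\<lambda>b. NUy x y q b $ 0)
   - NU x y q $ 0 * pb x y (\<lambda>a. NVx x y q a $ 2) (\<lambda>a. NVy x y q a $ 2) (Dx x y) (Dy x y)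
   = 0"
  by (simp add: unf) algebra

lemma pp_VU_21:
  "Dn x y q * pb x y (\<lambda>a. NVx x y q a $ 2) (\<lambda>a. NVy x y q a $ 2) (\<lambda>b. NUx x y q b $ 1) (\<lambda>b. NUy x y q b $ 1)
   - NV x y q $ 2 * pb x y (Dx x y) (Dy x y) (\<lambda>b. NUx x y q b $ 1) (\<lambda>b. NUy x y q b $ 1)
   - NU x y q $ 1 * pb x y (\<lambda>a. NVx x y q a $ 2) (\<lambda>a. NVy x y q a $ 2) (Dx x y) (Dy x y)
   = 0"
  by (simp add: unf) algebra

lemma pp_VU_22:
  "Dn x y q * pb x y (\<lambda>a. NVx x y q a $ 2) (\<lambda>a. NVy x y q a $ 2) (\<lambda>b. NUx x y q b $ 2) (\<lambda>b. NUy x y q b $ 2)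
   - NV x y q $ 2 * pb x y (Dx x y) (Dy x y) (\<lambda>b. NUx x y q b $ 2) (\<lambda>b. NUy x y q b $ 2)
   - NU x y q $ 2 * pb x y (\<lambda>a. NVx x y q a $ 2) (\<lambda>a. NVy x y q a $ 2) (Dx x y) (Dy x y)
   = 0"
  by (simp add: unf) algebra

lemma pp_VV_00:
  "Dn x y q * pb x y (\<lambda>a. NVx x y q a $ 0) (\<lambda>a. NVy x y q a $ 0) (\<lambda>b. NVx x y q b $ 0) (\<lambda>b. NVy x y q b $ 0)
   - NV x y q $ 0 * pb x y (Dx x y) (Dy x y) (\<lambda>b. NVx x y q b $ 0) (\<lambda>b. NVy x y q b $ 0)
   - NV x y q $ 0 * pb x y (\<lambda>a. NVx x y q a $ 0) (\<lambda>a. NVy x y q a $ 0) (Dx x y) (Dy x y)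
   = (Dn x y q)^2 * Jst (NV x y q) 0 0"
  by (simp add: unf) algebra

lemma pp_VV_01:
  "Dn x y q * pb x y (\<lambda>a. NVx x y q a $ 0) (\<lambda>a. NVy x y q a $ 0) (\<lambda>b. NVx x y q b $ 1) (\<lambda>b. NVy x y q b $ 1)
   - NV x y q $ 0 * pb x y (Dx x y) (Dy x y) (\<lambda>b. NVx x y q b $ 1) (\<lambda>b. NVy x y q b $ 1)
   - NV x y q $ 1 * pb x y (\<lambda>a. NVx x y q a $ 0) (\<lambda>a. NVy x y q a $ 0) (Dx x y) (Dy x y)
   = (Dn x y q)^2 * Jst (NV x y q) 0 1"
  by (simp add: unf) algebra

lemma pp_VV_02:
  "Dn x y q * pb x y (\<lambda>a. NVx x y q a $ 0) (\<lambda>a. NVy x y q a $ 0) (\<lambda>b. NVx x y q b $ 2) (\<lambda>b. NVy x y q b $ 2)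
   - NV x y q $ 0 * pb x y (Dx x y) (Dy x y) (\<lambda>b. NVx x y q b $ 2) (\<lambda>b. NVy x y q b $ 2)
   - NV x y q $ 2 * pb x y (\<lambda>a. NVx x y q a $ 0) (\<lambda>a. NVy x y q a $ 0) (Dx x y) (Dy x y)
   = (Dn x y q)^2 * Jst (NV x y q) 0 2"
  by (simp add: unf) algebra

lemma pp_VV_10:
  "Dn x y q * pb x y (\<lambda>a. NVx x y q a $ 1) (\<lambda>a. NVy x y q a $ 1) (\<lambda>b. NVx x y q b $ 0) (\<lambda>b. NVy x y q b $ 0)
   - NV x y q $ 1 * pb x y (Dx x y) (Dy x y) (\<lambda>b. NVx x y q b $ 0) (\<lambda>b. NVy x y q b $ 0)
   - NV x y q $ 0 * pb x y (\<lambda>a. NVx x y q a $ 1) (\<lambda>a. NVy x y q a $ 1) (Dx x y) (Dy x y)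
   = (Dn x y q)^2 * Jst (NV x y q) 1 0"
  by (simp add: unf) algebra

lemma pp_VV_11:
  "Dn x y q * pb x y (\<lambda>a. NVx x y q a $ 1) (\<lambda>a. NVy x y q a $ 1) (\<lambda>b. NVx x y q b $ 1) (\<lambda>b. NVy x y q b $ 1)
   - NV x y q $ 1 * pb x y (Dx x y) (Dy x y) (\<lambda>b. NVx x y q b $ 1) (\<lambda>b. NVy x y q b $ 1)
   - NV x y q $ 1 * pb x y (\<lambda>a. NVx x y q a $ 1) (\<lambda>a. NVy x y q a $ 1) (Dx x y) (Dy x y)
   = (Dn x y q)^2 * Jst (NV x y q) 1 1"
  by (simp add: unf) algebra

lemma pp_VV_12:
  "Dn x y q * pb x y (\<lambda>a. NVx x y q a $ 1) (\<lambda>a. NVy x y q a $ 1) (\<lambda>b. NVx x y q b $ 2) (\<lambda>b. NVy x y q b $ 2)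
   - NV x y q $ 1 * pb x y (Dx x y) (Dy x y) (\<lambda>b. NVx x y q b $ 2) (\<lambda>b. NVy x y q b $ 2)
   - NV x y q $ 2 * pb x y (\<lambda>a. NVx x y q a $ 1) (\<lambda>a. NVy x y q a $ 1) (Dx x y) (Dy x y)
   = (Dn x y q)^2 * Jst (NV x y q) 1 2"
  by (simp add: unf) algebra

lemma pp_VV_20:
  "Dn x y q * pb x y (\<lambda>a. NVx x y q a $ 2) (\<lambda>a. NVy x y q a $ 2) (\<lambda>b. NVx x y q b $ 0) (\<lambda>b. NVy x y q b $ 0)
   - NV x y q $ 2 * pb x y (Dx x y) (Dy x y) (\<lambda>b. NVx x y q b $ 0) (\<lambda>b. NVy x y q b $ 0)
   - NV x y q $ 0 * pb x y (\<lambda>a. NVx x y q a $ 2) (\<lambda>a. NVy x y q a $ 2) (Dx x y) (Dy x y)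
   = (Dn x y q)^2 * Jst (NV x y q) 2 0"
  by (simp add: unf) algebra

lemma pp_VV_21:
  "Dn x y q * pb x y (\<lambda>a. NVx x y q a $ 2) (\<lambda>a. NVy x y q a $ 2) (\<lambda>b. NVx x y q b $ 1) (\<lambda>b. NVy x y q b $ 1)
   - NV x y q $ 2 * pb x y (Dx x y) (Dy x y) (\<lambda>b. NVx x y q b $ 1) (\<lambda>b. NVy x y q b $ 1)
   - NV x y q $ 1 * pb x y (\<lambda>a. NVx x y q a $ 2) (\<lambda>a. NVy x y q a $ 2) (Dx x y) (Dy x y)
   = (Dn x y q)^2 * Jst (NV x y q) 2 1"
  by (simp add: unf) algebra

lemma pp_VV_22:
  "Dn x y q * pb x y (\<lambda>a. NVx x y q a $ 2) (\<lambda>a. NVy x y q a $ 2) (\<lambda>b. NVx x y q b $ 2) (\<lambda>b. NVy x y q b $ 2)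
   - NV x y q $ 2 * pb x y (Dx x y) (Dy x y) (\<lambda>b. NVx x y q b $ 2) (\<lambda>b. NVy x y q b $ 2)
   - NV x y q $ 2 * pb x y (\<lambda>a. NVx x y q a $ 2) (\<lambda>a. NVy x y q a $ 2) (Dx x y) (Dy x y)
   = (Dn x y q)^2 * Jst (NV x y q) 2 2"
  by (simp add: unf) algebra



lemma exhaust3: obtains "c = (0::3)" | "c = 1" | "c = 2"
  using UNIV3 by auto

lemma pp_UU: "Dn x y q * pb x y (\<lambda>a. NUx x y q a $ c) (\<lambda>a. NUy x y q a $ c) (\<lambda>b. NUx x y q b $ d) (\<lambda>b. NUy x y q b $ d)
   - NU x y q $ c * pb x y (Dx x y) (Dy x y) (\<lambda>b. NUx x y q b $ d) (\<lambda>b. NUy x y q b $ d)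
   - NU x y q $ d * pb x y (\<lambda>a. NUx x y q a $ c) (\<lambda>a. NUy x y q a $ c) (Dx x y) (Dy x y)
   = (Dn x y q)^2 * Jst (NU x y q) c d"
  by (cases c rule: exhaust3; cases d rule: exhaust3) (simp_all only: pp_UU_00 pp_UU_01 pp_UU_02 pp_UU_10 pp_UU_11 pp_UU_12 pp_UU_20 pp_UU_21 pp_UU_22)
lemma pp_VV: "Dn x y q * pb x y (\<lambda>a. NVx x y q a $ c) (\<lambda>a. NVy x y q a $ c) (\<lambda>b. NVx x y q b $ d) (\<lambda>b. NVy x y q b $ d)
   - NV x y q $ c * pb x y (Dx x y) (Dy x y) (\<lambda>b. NVx x y q b $ d) (\<lambda>b. NVy x y q b $ d)
   - NV x y q $ d * pb x y (\<lambda>a. NVx x y q a $ c) (\<lambda>a. NVy x y q a $ c) (Dx x y) (Dy x y)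
   = (Dn x y q)^2 * Jst (NV x y q) c d"
  by (cases c rule: exhaust3; cases d rule: exhaust3) (simp_all only: pp_VV_00 pp_VV_01 pp_VV_02 pp_VV_10 pp_VV_11 pp_VV_12 pp_VV_20 pp_VV_21 pp_VV_22)
lemma pp_UV: "Dn x y q * pb x y (\<lambda>a. NUx x y q a $ c) (\<lambda>a. NUy x y q a $ c) (\<lambda>b. NVx x y q b $ d) (\<lambda>b. NVy x y q b $ d)
   - NU x y q $ c * pb x y (Dx x y) (Dy x y) (\<lambda>b. NVx x y q b $ d) (\<lambda>b. NVy x y q b $ d)
   - NV x y q $ d * pb x y (\<lambda>a. NUx x y q a $ c) (\<lambda>a. NUy x y q a $ c) (Dx x y) (Dy x y)
   = 0"
  by (cases c rule: exhaust3; cases d rule: exhaust3) (simp_all only: pp_UV_00 pp_UV_01 pp_UV_02 pp_UV_10 pp_UV_11 pp_UV_12 pp_UV_20 pp_UV_21 pp_UV_22)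
lemma pp_VU: "Dn x y q * pb x y (\<lambda>a. NVx x y q a $ c) (\<lambda>a. NVy x y q a $ c) (\<lambda>b. NUx x y q b $ d) (\<lambda>b. NUy x y q b $ d)
   - NV x y q $ c * pb x y (Dx x y) (Dy x y) (\<lambda>b. NUx x y q b $ d) (\<lambda>b. NUy x y q b $ d)
   - NU x y q $ d * pb x y (\<lambda>a. NVx x y q a $ c) (\<lambda>a. NVy x y q a $ c) (Dx x y) (Dy x y)
   = 0"
  by (cases c rule: exhaust3; cases d rule: exhaust3) (simp_all only: pp_VU_00 pp_VU_01 pp_VU_02 pp_VU_10 pp_VU_11 pp_VU_12 pp_VU_20 pp_VU_21 pp_VU_22)

lemma pb_diff_left: "pb x y (\<lambda>a. F1 a - F2 a) (\<lambda>a. H1 a - H2 a) Gx Gy = pb x y F1 H1 Gx Gy - pb x y F2 H2 Gx Gy"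
  by (simp add: pb_def sum_subtractf[symmetric] algebra_simps)
lemma pb_diff_right: "pb x y Gx Gy (\<lambda>a. F1 a - F2 a) (\<lambda>a. H1 a - H2 a) = pb x y Gx Gy F1 H1 - pb x y Gx Gy F2 H2"
  by (simp add: pb_def sum_subtractf[symmetric] algebra_simps)
lemma pb_add_left: "pb x y (\<lambda>a. F1 a + F2 a) (\<lambda>a. H1 a + H2 a) Gx Gy = pb x y F1 H1 Gx Gy + pb x y F2 H2 Gx Gy"
  by (simp add: pb_def sum.distrib[symmetric] algebra_simps)
lemma pb_add_right: "pb x y Gx Gy (\<lambda>a. F1 a + F2 a) (\<lambda>a. H1 a + H2 a) = pb x y Gx Gy F1 H1 + pb x y Gx Gy F2 H2"
  by (simp add: pb_def sum.distrib[symmetric] algebra_simps)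
lemma pb_scale_left: "pb x y (\<lambda>a. r * F a) (\<lambda>a. r * H a) Gx Gy = r * pb x y F H Gx Gy"
  by (simp add: pb_def sum_distrib_left algebra_simps)
lemma pb_scale_right: "pb x y Gx Gy (\<lambda>a. r * F a) (\<lambda>a. r * H a) = r * pb x y Gx Gy F H"
  by (simp add: pb_def sum_distrib_left algebra_simps)
lemma pb_sum_left: "pb x y (\<lambda>a. \<Sum>c\<in>S. F c a) (\<lambda>a. \<Sum>c\<in>S. H c a) Gx Gy = (\<Sum>c\<in>S. pb x y (F c) (H c) Gx Gy)"
  by (simp add: pb_def sum_distrib_left sum_distrib_right sum.distrib[symmetric] algebra_simps sum.swap[of _ S])
lemma pb_sum_right: "pb x y Gx Gy (\<lambda>a. \<Sum>c\<in>S. F c a) (\<lambda>a. \<Sum>c\<in>S. H c a) = (\<Sum>c\<in>S. pb x y Gx Gy (F c) (H c))"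
  by (simp add: pb_def sum_distrib_left sum_distrib_right sum.distrib[symmetric] algebra_simps sum.swap[of _ S])
lemma pb_self: "pb x y F H F H = 0"
  by (simp add: pb_def sum3 Jst_def algebra_simps)

lemma pb_quot:
  assumes "D \<noteq> (0::real)"
  shows "pb x y (\<lambda>a. (D*Fx a - F*Hx a)/D^2) (\<lambda>a. (D*Fy a - F*Hy a)/D^2)
               (\<lambda>b. (D*Gx b - G*Hx b)/D^2) (\<lambda>b. (D*Gy b - G*Hy b)/D^2)
   = (D * pb x y Fx Fy Gx Gy - F * pb x y Hx Hy Gx Gy - G * pb x y Fx Fy Hx Hy) / D^3"
proof -
  have e: "\<And>K Kh. (\<lambda>a. (D*K a - F*Kh a)/D^2) = (\<lambda>a. (1/D) * K a - (F/D^2) * Kh a)"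
    "\<And>K Kh. (\<lambda>a. (D*K a - G*Kh a)/D^2) = (\<lambda>a. (1/D) * K a - (G/D^2) * Kh a)"
    using assms by (auto simp: fun_eq_iff field_simps power2_eq_square)
  show ?thesis
    unfolding e pb_diff_left pb_diff_right pb_scale_left pb_scale_right pb_self
    using assms by (simp add: field_simps power2_eq_square power3_eq_cube)
qed

lemma pb_lin:
  "pb x y (\<lambda>a. \<Sum>c\<in>UNIV. Ax c a * F1 c + Bx c a * F2 c) (\<lambda>a. \<Sum>c\<in>UNIV. Ay c a * F1 c + By c a * F2 c)
          (\<lambda>b. \<Sum>d\<in>UNIV. Ax d b * G1 d + Bx d b * G2 d) (\<lambda>b. \<Sum>d\<in>UNIV. Ay d b * G1 d + By d b * G2 d)
   = (\<Sum>c\<in>UNIV. \<Sum>d\<in>UNIV. F1 c * G1 d * pb x y (Ax c) (Ay c) (Ax d) (Ay d)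
        + F1 c * G2 d * pb x y (Ax c) (Ay c) (Bx d) (By d)
        + F2 c * G1 d * pb x y (Bx c) (By c) (Ax d) (Ay d)
        + F2 c * G2 d * pb x y (Bx c) (By c) (Bx d) (By d))"
proof -
  have e: "\<And>A B F1 F2. (\<lambda>a. A a * F1 + B a * (F2::real)) = (\<lambda>a. F1 * A a + F2 * B a)" by (simp add: fun_eq_iff mult.commute)
  show ?thesis
    unfolding pb_sum_left pb_sum_right pb_add_left pb_add_right pb_scale_left pb_scale_right
    by (simp add: e pb_add_left pb_add_right pb_scale_left pb_scale_right algebra_simps)
qed

lemma casimir_NU: "casimir (NU x y q) = (Dn x y q)^2 * casimir x"
  by (simp add: casimir_def unf) algebra
lemma casimir_NV: "casimir (NV x y q) = (Dn x y q)^2 * casimir y"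
  by (simp add: casimir_def unf) algebra


lemma Rhat_eq:
  assumes "Dn x y (\<alpha>-\<beta>) \<noteq> 0"
  shows "Rhat \<alpha> \<beta> x y = ((1 / Dn x y (\<alpha>-\<beta>)) *\<^sub>R NU x y (\<alpha>-\<beta>), (1 / Dn x y (\<alpha>-\<beta>)) *\<^sub>R NV x y (\<alpha>-\<beta>))"
proof -
  define q where "q = \<alpha>-\<beta>"
  define D where "D = Dn x y q"
  have D: "D \<noteq> 0" using assms by (simp add: D_def q_def)
  have k1: "khat x y q = (mink x x - mink y y + q^2) / D" by (simp add: khat_def D_def Dn_def)
  have k2: "khat y x q = (mink y y - mink x x + q^2) / D" by (simp add: khat_def D_def Dn_def add.commute)
  have m1: "1 - khat y x q = (2 * mink x (x+y)) / D"
  proof -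
    have "D - (mink y y - mink x x + q^2) = 2 * mink x (x+y)"
      by (simp add: D_def Dn_def mink_def) algebra
    then show ?thesis using D by (simp add: k2 field_simps)
  qed
  have m2: "1 - khat x y q = (2 * mink y (x+y)) / D"
  proof -
    have "D - (mink x x - mink y y + q^2) = 2 * mink y (x+y)"
      by (simp add: D_def Dn_def mink_def) algebra
    then show ?thesis using D by (simp add: k1 field_simps)
  qed
  have r: "rhat x y q = (1/D) *\<^sub>R wv x y" by (simp add: rhat_def wv_def D_def Dn_def)
  have "fst (Rhat \<alpha> \<beta> x y) = (1/D) *\<^sub>R NU x y q"
    unfolding Rhat_def Let_def q_def[symmetric] fst_conv k1 m1 r NU_def
    by (simp add: scaleR_add_right divide_inverse_commute)
  moreover have "snd (Rhat \<alpha> \<beta> x y) = (1/D) *\<^sub>R NV x y q"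
    unfolding Rhat_def Let_def q_def[symmetric] snd_conv k2 m2 r NV_def
    by (simp add: scaleR_add_right scaleR_diff_right divide_inverse_commute)
  ultimately show ?thesis by (simp add: prod_eq_iff D_def q_def)
qed


lemma Rhat_sum: "fst (Rhat \<alpha> \<beta> x y) + snd (Rhat \<alpha> \<beta> x y) = x + y"
  unfolding Rhat_def Let_def by (simp add: algebra_simps)

definition JUx where "JUx x y q c a = (Dn x y q * NUx x y q a $ c - NU x y q $ c * Dx x y a) / (Dn x y q)^2"
definition JUy where "JUy x y q c a = (Dn x y q * NUy x y q a $ c - NU x y q $ c * Dy x y a) / (Dn x y q)^2"
definition JVx where "JVx x y q c a = (Dn x y q * NVx x y q a $ c - NV x y q $ c * Dx x y a) / (Dn x y q)^2"
definition JVy where "JVy x y q c a = (Dn x y q * NVy x y q a $ c - NV x y q $ c * Dy x y a) / (Dn x y q)^2"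

lemma Jst_scale: "Jst (r *\<^sub>R z) a b = r * Jst z a b"
  by (simp add: Jst_def)

lemma pair_pb:
  assumes D: "Dn x y q \<noteq> 0"
  shows "pb x y (\<lambda>a. \<Sum>c\<in>UNIV. JUx x y q c a * F1 c + JVx x y q c a * F2 c)
                (\<lambda>a. \<Sum>c\<in>UNIV. JUy x y q c a * F1 c + JVy x y q c a * F2 c)
                (\<lambda>b. \<Sum>d\<in>UNIV. JUx x y q d b * G1 d + JVx x y q d b * G2 d)
                (\<lambda>b. \<Sum>d\<in>UNIV. JUy x y q d b * G1 d + JVy x y q d b * G2 d)
   = pb ((1 / Dn x y q) *\<^sub>R NU x y q) ((1 / Dn x y q) *\<^sub>R NV x y q) F1 F2 G1 G2"
proof -
  let ?D = "Dn x y q"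
  have uu: "pb x y (JUx x y q c) (JUy x y q c) (JUx x y q d) (JUy x y q d) = Jst ((1 / ?D) *\<^sub>R NU x y q) c d" for c d
  proof -
    have "pb x y (JUx x y q c) (JUy x y q c) (JUx x y q d) (JUy x y q d)
      = (?D * pb x y (\<lambda>a. NUx x y q a $ c) (\<lambda>a. NUy x y q a $ c) (\<lambda>b. NUx x y q b $ d) (\<lambda>b. NUy x y q b $ d)
   - NU x y q $ c * pb x y (Dx x y) (Dy x y) (\<lambda>b. NUx x y q b $ d) (\<lambda>b. NUy x y q b $ d)
   - NU x y q $ d * pb x y (\<lambda>a. NUx x y q a $ c) (\<lambda>a. NUy x y q a $ c) (Dx x y) (Dy x y)) / ?D^3"
      unfolding JUx_def[abs_def] JUy_def[abs_def] using pb_quot[OF D] by simp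
    also have "\<dots> = ?D^2 * Jst (NU x y q) c d / ?D^3" by (simp only: pp_UU)
    finally show ?thesis using D by (simp add: Jst_scale power2_eq_square power3_eq_cube)
  qed
  have vv: "pb x y (JVx x y q c) (JVy x y q c) (JVx x y q d) (JVy x y q d) = Jst ((1 / ?D) *\<^sub>R NV x y q) c d" for c d
  proof -
    have "pb x y (JVx x y q c) (JVy x y q c) (JVx x y q d) (JVy x y q d)
      = (?D * pb x y (\<lambda>a. NVx x y q a $ c) (\<lambda>a. NVy x y q a $ c) (\<lambda>b. NVx x y q b $ d) (\<lambda>b. NVy x y q b $ d)
   - NV x y q $ c * pb x y (Dx x y) (Dy x y) (\<lambda>b. NVx x y q b $ d) (\<lambda>b. NVy x y q b $ d)
   - NV x y q $ d * pb x y (\<lambda>a. NVx x y q a $ c) (\<lambda>a. NVy x y q a $ c) (Dx x y) (Dy x y)) / ?D^3"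
      unfolding JVx_def[abs_def] JVy_def[abs_def] using pb_quot[OF D] by simp
    also have "\<dots> = ?D^2 * Jst (NV x y q) c d / ?D^3" by (simp only: pp_VV)
    finally show ?thesis using D by (simp add: Jst_scale power2_eq_square power3_eq_cube)
  qed
  have uv: "pb x y (JUx x y q c) (JUy x y q c) (JVx x y q d) (JVy x y q d) = 0" for c d
  proof -
    have "pb x y (JUx x y q c) (JUy x y q c) (JVx x y q d) (JVy x y q d)
      = (?D * pb x y (\<lambda>a. NUx x y q a $ c) (\<lambda>a. NUy x y q a $ c) (\<lambda>b. NVx x y q b $ d) (\<lambda>b. NVy x y q b $ d)
   - NU x y q $ c * pb x y (Dx x y) (Dy x y) (\<lambda>b. NVx x y q b $ d) (\<lambda>b. NVy x y q b $ d)
   - NV x y q $ d * pb x y (\<lambda>a. NUx x y q a $ c) (\<lambda>a. NUy x y q a $ c) (Dx x y) (Dy x y)) / ?D^3"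
      unfolding JUx_def[abs_def] JUy_def[abs_def] JVx_def[abs_def] JVy_def[abs_def] using pb_quot[OF D] by simp
    also have "\<dots> = 0" by (simp add: pp_UV)
    finally show ?thesis .
  qed
  have vu: "pb x y (JVx x y q c) (JVy x y q c) (JUx x y q d) (JUy x y q d) = 0" for c d
  proof -
    have "pb x y (JVx x y q c) (JVy x y q c) (JUx x y q d) (JUy x y q d)
      = (?D * pb x y (\<lambda>a. NVx x y q a $ c) (\<lambda>a. NVy x y q a $ c) (\<lambda>b. NUx x y q b $ d) (\<lambda>b. NUy x y q b $ d)
   - NV x y q $ c * pb x y (Dx x y) (Dy x y) (\<lambda>b. NUx x y q b $ d) (\<lambda>b. NUy x y q b $ d)
   - NU x y q $ d * pb x y (\<lambda>a. NVx x y q a $ c) (\<lambda>a. NVy x y q a $ c) (Dx x y) (Dy x y)) / ?D^3"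
      unfolding JUx_def[abs_def] JUy_def[abs_def] JVx_def[abs_def] JVy_def[abs_def] using pb_quot[OF D] by simp
    also have "\<dots> = 0" by (simp add: pp_VU)
    finally show ?thesis .
  qed
  show ?thesis
    unfolding pb_lin uu vv uv vu
    by (simp add: pb_def algebra_simps)
qed

lemma UNIV2: "(UNIV :: 2 set) = {0,1}"
proof -
  have "(2::2) = 0" by simp
  then show ?thesis using UNIV_2 by auto
qed

lemma sum2: "sum f (UNIV::2 set) = f 0 + f 1"
  unfolding UNIV2 by simp

lemma exhaust2: obtains "c = (0::2)" | "c = 1"
  using UNIV2 by auto



lemma all2: "(\<forall>i::2. P i) \<longleftrightarrow> P 0 \<and> P 1"
proof
  assume "P 0 \<and> P 1"
  then show "\<forall>i. P i" by (metis exhaust2)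
qed simp

definition Lsc :: "real^3 \<Rightarrow> real \<Rightarrow> real \<Rightarrow> complex \<Rightarrow> complex^2^2" where
  "Lsc z D a \<zeta> = (\<chi> r c.
     if r = 0 \<and> c = 0 then of_real D * (\<zeta> - \<i> * of_real a) + \<i> * of_real (z$2)
     else if r = 0 \<and> c = 1 then complex_of_real (z$0 + z$1)
     else if r = 1 \<and> c = 0 then complex_of_real (z$0 - z$1)
     else of_real D * (\<zeta> - \<i> * of_real a) - \<i> * of_real (z$2))"

lemma Lmat_Lsc: "D \<noteq> 0 \<Longrightarrow> Lmat ((1/D) *\<^sub>R z) a \<zeta> = (1/D) *\<^sub>R Lsc z D a \<zeta>"
  by (simp add: vec_eq_iff all2 Lmat_def Lsc_def complex_eq_iff field_simps)

lemma mat_scaleR_mult: "(scaleR r (A::complex^2^2)) ** (scaleR s B) = scaleR (r * s) (A ** B)"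
  by (simp add: vec_eq_iff matrix_matrix_mult_def scaleR_sum_right mult.commute)

lemma Lsc_prod: "Lsc (NU x y (\<alpha>-\<beta>)) (Dn x y (\<alpha>-\<beta>)) \<alpha> \<zeta> ** Lsc (NV x y (\<alpha>-\<beta>)) (Dn x y (\<alpha>-\<beta>)) \<beta> \<zeta>
   = scaleR ((Dn x y (\<alpha>-\<beta>))^2) (Lmat y \<beta> \<zeta> ** Lmat x \<alpha> \<zeta>)"
  unfolding vec_eq_iff matrix_matrix_mult_def all2
  by (simp add: sum2 Lmat_def Lsc_def complex_eq_iff Dn_def NU_def NV_def wv_def mink_def; algebra)

lemma refact:
  assumes D: "Dn x y (\<alpha>-\<beta>) \<noteq> 0"
  shows "Lmat y \<beta> \<zeta> ** Lmat x \<alpha> \<zeta>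
       = Lmat ((1 / Dn x y (\<alpha>-\<beta>)) *\<^sub>R NU x y (\<alpha>-\<beta>)) \<alpha> \<zeta> ** Lmat ((1 / Dn x y (\<alpha>-\<beta>)) *\<^sub>R NV x y (\<alpha>-\<beta>)) \<beta> \<zeta>"
  using D by (simp add: Lmat_Lsc mat_scaleR_mult Lsc_prod power2_eq_square)


lemma linear_mink2: "linear (\<lambda>y. mink x y)"
  by (rule linearI) (simp_all add: mink_def algebra_simps)
lemma linear_mink1: "linear (\<lambda>x. mink x y)"
  by (rule linearI) (simp_all add: mink_def algebra_simps)
lemma bb_mink: "bounded_bilinear mink"
  using linear_mink1 linear_mink2 by (simp add: bilinear_conv_bounded_bilinear[symmetric] bilinear_def)
lemmas has_derivative_mink[derivative_intros] = bounded_bilinear.FDERIV[OF bb_mink]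

lemma linear_wv2: "linear (\<lambda>y. wv x y)"
  by (rule linearI) (simp_all add: wv_def vec_eq_iff vec3_def algebra_simps)
lemma linear_wv1: "linear (\<lambda>x. wv x y)"
  by (rule linearI) (simp_all add: wv_def vec_eq_iff vec3_def algebra_simps)
lemma bb_wv: "bounded_bilinear wv"
  using linear_wv1 linear_wv2 by (simp add: bilinear_conv_bounded_bilinear[symmetric] bilinear_def)
lemmas has_derivative_wv[derivative_intros] = bounded_bilinear.FDERIV[OF bb_wv]

lemma mink_sym: "mink x y = mink y x" by (simp add: mink_def algebra_simps)
lemma mink_add1: "mink (a+b) c = mink a c + mink b c" by (simp add: mink_def algebra_simps)
lemma mink_add2: "mink c (a+b) = mink c a + mink c b" by (simp add: mink_def algebra_simps)
lemma wv_add1: "wv (a+b) c = wv a c + wv b c" by (simp add: wv_def vec_eq_iff vec3_def algebra_simps)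
lemma wv_add2: "wv c (a+b) = wv c a + wv c b" by (simp add: wv_def vec_eq_iff vec3_def algebra_simps)

lemma Dn_deriv: "((\<lambda>z. Dn (fst z) (snd z) q) has_derivative (\<lambda>w. dDn x y (fst w) (snd w))) (at (x,y))"
  unfolding Dn_def dDn_def
  apply (rule derivative_eq_intros refl | simp)+
  apply (simp add: fun_eq_iff mink_add1 mink_add2 mink_sym algebra_simps)
  done


lemma NU_deriv: "((\<lambda>z. NU (fst z) (snd z) q) has_derivative (\<lambda>w. dNU x y q (fst w) (snd w))) (at (x,y))"
  unfolding NU_def dNU_def
  apply (rule derivative_eq_intros refl | simp)+
  apply (simp add: fun_eq_iff mink_add1 mink_add2 mink_sym wv_add1 wv_add2 algebra_simps)
  done

lemma NV_deriv: "((\<lambda>z. NV (fst z) (snd z) q) has_derivative (\<lambda>w. dNV x y q (fst w) (snd w))) (at (x,y))"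
  unfolding NV_def dNV_def
  apply (rule derivative_eq_intros refl | simp)+
  apply (simp add: fun_eq_iff mink_add1 mink_add2 mink_sym wv_add1 wv_add2 algebra_simps)
  done


definition DU where "DU x y q h k = (1 / (Dn x y q)^2) *\<^sub>R (Dn x y q *\<^sub>R dNU x y q h k - dDn x y h k *\<^sub>R NU x y q)"
definition DV where "DV x y q h k = (1 / (Dn x y q)^2) *\<^sub>R (Dn x y q *\<^sub>R dNV x y q h k - dDn x y h k *\<^sub>R NV x y q)"

lemma open_Dn: "open {z. Dn (fst z) (snd z) q \<noteq> 0}"
proof -
  have "continuous_on UNIV (\<lambda>z::(real^3)\<times>(real^3). Dn (fst z) (snd z) q)"
    apply (rule has_derivative_continuous_on[where f'="\<lambda>z w. dDn (fst z) (snd z) (fst w) (snd w)"])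
    subgoal for z using Dn_deriv[of q "fst z" "snd z"] by simp
    done
  then show ?thesis by (rule open_Collect_neq) (rule continuous_on_const)
qed

lemma U_deriv:
  assumes "Dn x y q \<noteq> 0"
  shows "((\<lambda>z. (1 / Dn (fst z) (snd z) q) *\<^sub>R NU (fst z) (snd z) q) has_derivative (\<lambda>w. DU x y q (fst w) (snd w))) (at (x,y))"
  apply (rule has_derivative_eq_rhs)
   apply (rule NU_deriv Dn_deriv derivative_intros)+
  using assms apply simp
   apply (rule NU_deriv)
  using assms apply (simp add: fun_eq_iff DU_def scaleR_diff_right power2_eq_square divide_inverse)
  apply (intro allI)
  apply (subgoal_tac "inverse (Dn x y q) * inverse (Dn x y q) * Dn x y q = inverse (Dn x y q)")
   apply (simp add: mult_ac)
  apply (simp add: mult.assoc)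
  done

lemma V_deriv:
  assumes "Dn x y q \<noteq> 0"
  shows "((\<lambda>z. (1 / Dn (fst z) (snd z) q) *\<^sub>R NV (fst z) (snd z) q) has_derivative (\<lambda>w. DV x y q (fst w) (snd w))) (at (x,y))"
  apply (rule has_derivative_eq_rhs)
   apply (rule NV_deriv Dn_deriv derivative_intros)+
  using assms apply simp
   apply (rule NV_deriv)
  using assms apply (simp add: fun_eq_iff DV_def scaleR_diff_right power2_eq_square divide_inverse)
  apply (intro allI)
  apply (subgoal_tac "inverse (Dn x y q) * inverse (Dn x y q) * Dn x y q = inverse (Dn x y q)")
   apply (simp add: mult_ac)
  apply (simp add: mult.assoc)
  done

lemma Rfst_deriv:
  assumes "Dn x y (\<alpha>-\<beta>) \<noteq> 0"
  shows "((\<lambda>z. fst (Rhat \<alpha> \<beta> (fst z) (snd z))) has_derivative (\<lambda>w. DU x y (\<alpha>-\<beta>) (fst w) (snd w))) (at (x,y))"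
  apply (rule has_derivative_transform_within_open[OF U_deriv[OF assms] open_Dn])
  using assms by (auto simp: Rhat_eq)

lemma Rsnd_deriv:
  assumes "Dn x y (\<alpha>-\<beta>) \<noteq> 0"
  shows "((\<lambda>z. snd (Rhat \<alpha> \<beta> (fst z) (snd z))) has_derivative (\<lambda>w. DV x y (\<alpha>-\<beta>) (fst w) (snd w))) (at (x,y))"
  apply (rule has_derivative_transform_within_open[OF V_deriv[OF assms] open_Dn])
  using assms by (auto simp: Rhat_eq)

lemma DU_comp: "DU x y q (e3 a) 0 $ c = JUx x y q c a" "DU x y q 0 (e3 a) $ c = JUy x y q c a"
  "DV x y q (e3 a) 0 $ c = JVx x y q c a" "DV x y q 0 (e3 a) $ c = JVy x y q c a"
  by (simp_all add: DU_def DV_def JUx_def JUy_def JVx_def JVy_def NUx_def NUy_def NVx_def NVy_def Dx_def Dy_def divide_inverse mult.commute)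

lemma DU_zero: "DU x y q 0 0 = 0" "DV x y q 0 0 = 0"
  by (simp_all add: DU_def DV_def dNU_def dNV_def dDn_def mink_def wv_def vec_eq_iff vec3_def)


lemma csucc_gt: "i \<noteq> Max UNIV \<Longrightarrow> i < csucc (i::'n::{finite,linorder})"
proof -
  assume a: "i \<noteq> Max UNIV"
  have le: "i \<le> Max UNIV" by simp
  have "i < Max UNIV" using le a by (simp add: le_less)
  then have ne: "{j. i < j} \<noteq> {}" by blast
  have "Min {j. i < j} \<in> {j. i < j}" using ne by (intro Min_in) auto
  then show ?thesis using a by (simp add: csucc_def)
qed

lemma csucc_le: "i < j \<Longrightarrow> csucc (i::'n::{finite,linorder}) \<le> j"
proof -
  assume a: "i < j"
  have "i \<noteq> Max UNIV" using a Max_ge[of UNIV j] by auto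
  then show ?thesis using a by (simp add: csucc_def)
qed

lemma inj_csucc: "inj (csucc :: 'n::{finite,linorder} \<Rightarrow> 'n)"
proof (rule injI)
  have main: "csucc i \<noteq> csucc j" if ij: "i < j" for i j :: 'n
  proof
    assume eq: "csucc i = csucc j"
    have im: "i \<noteq> Max UNIV" using ij Max_ge[of UNIV j] by auto
    have "i < csucc i" by (rule csucc_gt[OF im])
    have "csucc i \<le> j" by (rule csucc_le[OF ij])
    show False
    proof (cases "j = Max UNIV")
      case True
      then have "csucc j = Min UNIV" by (simp add: csucc_def)
      then have "csucc j \<le> i" by simp
      then show False using \<open>i < csucc i\<close> eq by simp
    next
      case False
      then have "j < csucc j" by (rule csucc_gt)
      then show False using \<open>csucc i \<le> j\<close> eq by simp
    qed
  qed
  fix i j :: 'n assume "csucc i = csucc j"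
  then show "i = j" using main[of i j] main[of j i] by (metis linorder_neqE)
qed

lemma surj_csucc: "surj (csucc :: 'n::{finite,linorder} \<Rightarrow> 'n)"
  using finite_UNIV_inj_surj[OF _ inj_csucc] by simp

definition cpred :: "'n::{finite,linorder} \<Rightarrow> 'n" where "cpred = inv csucc"

lemma csucc_cpred[simp]: "csucc (cpred i) = i"
  unfolding cpred_def by (metis surj_csucc surj_f_inv_f)
lemma cpred_csucc[simp]: "cpred (csucc i) = i"
  unfolding cpred_def by (metis inj_csucc inv_f_f)
lemma csucc_eq_iff: "csucc j = i \<longleftrightarrow> j = cpred i"
  by (metis csucc_cpred cpred_csucc)

lemma sum_csucc: "(\<Sum>i\<in>UNIV. g (csucc i)) = (\<Sum>i\<in>(UNIV::'n::{finite,linorder} set). g i)"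
proof -
  have "(\<Sum>i\<in>UNIV. g i) = (\<Sum>i\<in>csucc ` UNIV. g i)" by (metis surj_csucc)
  also have "\<dots> = (\<Sum>i\<in>UNIV. g (csucc i))" by (simp add: sum.reindex[OF inj_csucc])
  finally show ?thesis by simp
qed

lemma has_derivative_vec_lambda:
  fixes f :: "'i::finite \<Rightarrow> 'a::euclidean_space \<Rightarrow> 'b::real_normed_vector"
  assumes d: "\<And>i. (f i has_derivative f' i) (at x)"
  shows "((\<lambda>y. \<chi> i. f i y) has_derivative (\<lambda>h. \<chi> i. f' i h)) (at x)"
proof -
  have bl: "bounded_linear (f' i)" for i using d has_derivative_bounded_linear by blast
  have "linear (\<lambda>h. \<chi> i. f' i h)"
    using bl by (intro linearI) (simp_all add: vec_eq_iff bounded_linear.linear linear_add linear_scale)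
  then have "bounded_linear (\<lambda>h. \<chi> i. f' i h)" by (simp add: linear_conv_bounded_linear)
  moreover have "((\<lambda>y. (1 / norm (y - x)) *\<^sub>R ((\<chi> i. f i y) - ((\<chi> i. f i x) + (\<chi> i. f' i (y - x))))) \<longlongrightarrow> 0) (at x)"
  proof -
    have t: "((\<lambda>y. (1 / norm (y - x)) *\<^sub>R (f i y - (f i x + f' i (y - x)))) \<longlongrightarrow> 0) (at x)" for i
      using d[of i] by (simp add: has_derivative_within)
    have "((\<lambda>y. \<chi> i. (1 / norm (y - x)) *\<^sub>R (f i y - (f i x + f' i (y - x)))) \<longlongrightarrow> (\<chi> i. 0)) (at x)"
      by (rule tendsto_vec_lambda) (rule t)
    moreover have "(\<lambda>y. \<chi> i. (1 / norm (y - x)) *\<^sub>R (f i y - (f i x + f' i (y - x))))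
       = (\<lambda>y. (1 / norm (y - x)) *\<^sub>R ((\<chi> i. f i y) - ((\<chi> i. f i x) + (\<chi> i. f' i (y - x)))))"
      by (simp add: vec_eq_iff fun_eq_iff)
    ultimately show ?thesis by (simp add: zero_vec_def)
  qed
  ultimately show ?thesis by (simp add: has_derivative_within)
qed


definition Tder :: "real \<Rightarrow> real \<Rightarrow> 'n::{finite,linorder} state \<Rightarrow> 'n state \<Rightarrow> 'n state" where
  "Tder \<alpha> \<beta> p h = ((\<chi> i. DU (fst p $ i) (snd p $ i) (\<alpha>-\<beta>) (fst h $ i) (snd h $ i)),
     (\<chi> i. DV (fst p $ csucc i) (snd p $ csucc i) (\<alpha>-\<beta>) (fst h $ csucc i) (snd h $ csucc i)))"

lemma proj_deriv: "((\<lambda>p::'n::finite state. (fst p $ i, snd p $ i)) has_derivative (\<lambda>h. (fst h $ i, snd h $ i))) (at p)"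
proof -
  have "linear (\<lambda>h::'n state. (fst h $ i, snd h $ i))" by (intro linearI) auto
  then have "bounded_linear (\<lambda>h::'n state. (fst h $ i, snd h $ i))" by (simp add: linear_conv_bounded_linear)
  then show ?thesis by (rule bounded_linear_imp_has_derivative)
qed

lemma generic_Dn: "p \<in> generic \<alpha> \<beta> \<Longrightarrow> Dn (fst p $ i) (snd p $ i) (\<alpha>-\<beta>) \<noteq> 0"
  by (simp add: generic_def Dn_def)

lemma T_deriv:
  assumes p: "p \<in> generic \<alpha> \<beta>"
  shows "(Tmap \<alpha> \<beta> has_derivative Tder \<alpha> \<beta> p) (at p)"
proof -
  have d1: "((\<lambda>p. fst (Rhat \<alpha> \<beta> (fst p $ i) (snd p $ i))) has_derivative
        (\<lambda>h. DU (fst p $ i) (snd p $ i) (\<alpha>-\<beta>) (fst h $ i) (snd h $ i))) (at p)" for i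
  proof -
    have "(((\<lambda>z. fst (Rhat \<alpha> \<beta> (fst z) (snd z))) \<circ> (\<lambda>p. (fst p $ i, snd p $ i))) has_derivative
        ((\<lambda>w. DU (fst p $ i) (snd p $ i) (\<alpha>-\<beta>) (fst w) (snd w)) \<circ> (\<lambda>h. (fst h $ i, snd h $ i)))) (at p)"
      by (rule diff_chain_at[OF proj_deriv]) (simp add: Rfst_deriv generic_Dn[OF p])
    then show ?thesis by (simp add: o_def)
  qed
  have d2: "((\<lambda>p. snd (Rhat \<alpha> \<beta> (fst p $ csucc i) (snd p $ csucc i))) has_derivative
        (\<lambda>h. DV (fst p $ csucc i) (snd p $ csucc i) (\<alpha>-\<beta>) (fst h $ csucc i) (snd h $ csucc i))) (at p)" for i
  proof -
    have "(((\<lambda>z. snd (Rhat \<alpha> \<beta> (fst z) (snd z))) \<circ> (\<lambda>p. (fst p $ csucc i, snd p $ csucc i))) has_derivative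
        ((\<lambda>w. DV (fst p $ csucc i) (snd p $ csucc i) (\<alpha>-\<beta>) (fst w) (snd w)) \<circ> (\<lambda>h. (fst h $ csucc i, snd h $ csucc i)))) (at p)"
      by (rule diff_chain_at[OF proj_deriv]) (simp add: Rsnd_deriv generic_Dn[OF p])
    then show ?thesis by (simp add: o_def)
  qed
  have "((\<lambda>p. ((\<chi> i. fst (Rhat \<alpha> \<beta> (fst p $ i) (snd p $ i))), (\<chi> i. snd (Rhat \<alpha> \<beta> (fst p $ csucc i) (snd p $ csucc i)))))
     has_derivative Tder \<alpha> \<beta> p) (at p)"
    unfolding Tder_def
    by (intro has_derivative_Pair has_derivative_vec_lambda d1 d2)
  then show ?thesis by (simp add: Tmap_def[abs_def])
qed

lemma Tder_X: "Tder \<alpha> \<beta> p (axis i (e3 a), 0) =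
   (axis i (DU (fst p $ i) (snd p $ i) (\<alpha>-\<beta>) (e3 a) 0), axis (cpred i) (DV (fst p $ i) (snd p $ i) (\<alpha>-\<beta>) (e3 a) 0))"
  by (auto simp: Tder_def vec_eq_iff axis_def DU_zero csucc_eq_iff zero_vec_def[symmetric])

lemma Tder_Y: "Tder \<alpha> \<beta> p (0, axis i (e3 a)) =
   (axis i (DU (fst p $ i) (snd p $ i) (\<alpha>-\<beta>) 0 (e3 a)), axis (cpred i) (DV (fst p $ i) (snd p $ i) (\<alpha>-\<beta>) 0 (e3 a)))"
  by (auto simp: Tder_def vec_eq_iff axis_def DU_zero csucc_eq_iff zero_vec_def[symmetric])


lemma all3: "(\<forall>i::3. P i) \<longleftrightarrow> P 0 \<and> P 1 \<and> P 2"
  by (metis exhaust3)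

lemma lin_expand:
  fixes F :: "'n::finite state \<Rightarrow> real"
  assumes "linear F"
  shows "F (axis i v, axis j w) = (\<Sum>c\<in>UNIV. v$c * F (axis i (e3 c), 0) + w$c * F (0, axis j (e3 c)))"
proof -
  have e: "(axis i v, axis j w) = v$0 *\<^sub>R (axis i (e3 0), 0) + v$1 *\<^sub>R (axis i (e3 1), 0) + v$2 *\<^sub>R (axis i (e3 2), 0)
     + (w$0 *\<^sub>R (0, axis j (e3 0)) + w$1 *\<^sub>R (0, axis j (e3 1)) + w$2 *\<^sub>R (0, axis j (e3 2)))"
    by (simp add: prod_eq_iff vec_eq_iff axis_def all3)
  show ?thesis
    unfolding e linear_add[OF assms] linear_scale[OF assms] sum3 by (simp add: algebra_simps)
qed

definition pb1 :: "real^3 \<Rightarrow> (3 \<Rightarrow> real) \<Rightarrow> (3 \<Rightarrow> real) \<Rightarrow> real" where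
  "pb1 z F G = (\<Sum>a\<in>UNIV. \<Sum>b\<in>UNIV. Jst z a b * F a * G b)"

lemma pb_split: "pb x y Fx Fy Gx Gy = pb1 x Fx Gx + pb1 y Fy Gy"
  by (simp add: pb_def pb1_def sum.distrib)

lemma pbracket_pb: "pbracket (f::'n::finite state \<Rightarrow> real) g p
   = (\<Sum>i\<in>UNIV. pb (fst p $ i) (snd p $ i) (dX f p i) (dY f p i) (dX g p i) (dY g p i))"
  by (simp add: pbracket_def pb_def mult.assoc)

lemma dX_comp:
  fixes f :: "'n::{finite,linorder} state \<Rightarrow> real"
  assumes p: "p \<in> generic \<alpha> \<beta>" and f: "f differentiable (at (Tmap \<alpha> \<beta> p))"
  shows "dX (f \<circ> Tmap \<alpha> \<beta>) p i a = (\<Sum>c\<in>UNIV. JUx (fst p $ i) (snd p $ i) (\<alpha>-\<beta>) c a * dX f (Tmap \<alpha> \<beta> p) i c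
        + JVx (fst p $ i) (snd p $ i) (\<alpha>-\<beta>) c a * dY f (Tmap \<alpha> \<beta> p) (cpred i) c)"
    and "dY (f \<circ> Tmap \<alpha> \<beta>) p i a = (\<Sum>c\<in>UNIV. JUy (fst p $ i) (snd p $ i) (\<alpha>-\<beta>) c a * dX f (Tmap \<alpha> \<beta> p) i c
        + JVy (fst p $ i) (snd p $ i) (\<alpha>-\<beta>) c a * dY f (Tmap \<alpha> \<beta> p) (cpred i) c)"
proof -
  let ?F = "frechet_derivative f (at (Tmap \<alpha> \<beta> p))"
  have fd: "(f has_derivative ?F) (at (Tmap \<alpha> \<beta> p))" using f by (rule frechet_derivative_works[THEN iffD1])
  have lin: "linear ?F" using fd has_derivative_bounded_linear bounded_linear.linear by blast
  have "((f \<circ> Tmap \<alpha> \<beta>) has_derivative (?F \<circ> Tder \<alpha> \<beta> p)) (at p)"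
    by (rule diff_chain_at[OF T_deriv[OF p] fd])
  then have fr: "frechet_derivative (f \<circ> Tmap \<alpha> \<beta>) (at p) = ?F \<circ> Tder \<alpha> \<beta> p"
    by (rule frechet_derivative_at[symmetric])
  show "dX (f \<circ> Tmap \<alpha> \<beta>) p i a = (\<Sum>c\<in>UNIV. JUx (fst p $ i) (snd p $ i) (\<alpha>-\<beta>) c a * dX f (Tmap \<alpha> \<beta> p) i c
        + JVx (fst p $ i) (snd p $ i) (\<alpha>-\<beta>) c a * dY f (Tmap \<alpha> \<beta> p) (cpred i) c)"
    unfolding dX_def fr by (simp add: Tder_X lin_expand[OF lin] DU_comp dY_def)
  show "dY (f \<circ> Tmap \<alpha> \<beta>) p i a = (\<Sum>c\<in>UNIV. JUy (fst p $ i) (snd p $ i) (\<alpha>-\<beta>) c a * dX f (Tmap \<alpha> \<beta> p) i c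
        + JVy (fst p $ i) (snd p $ i) (\<alpha>-\<beta>) c a * dY f (Tmap \<alpha> \<beta> p) (cpred i) c)"
    unfolding dY_def fr by (simp add: Tder_Y lin_expand[OF lin] DU_comp dX_def)
qed

lemma Tmap_fst: "fst (Tmap \<alpha> \<beta> p) $ i = fst (Rhat \<alpha> \<beta> (fst p $ i) (snd p $ i))"
  by (simp add: Tmap_def)
lemma Tmap_snd: "snd (Tmap \<alpha> \<beta> p) $ cpred i = snd (Rhat \<alpha> \<beta> (fst p $ i) (snd p $ i))"
  by (simp add: Tmap_def)

lemma poisson_map:
  fixes f g :: "'n::{finite,linorder} state \<Rightarrow> real"
  assumes p: "p \<in> generic \<alpha> \<beta>" and f: "f differentiable (at (Tmap \<alpha> \<beta> p))"
    and g: "g differentiable (at (Tmap \<alpha> \<beta> p))"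
  shows "pbracket (f \<circ> Tmap \<alpha> \<beta>) (g \<circ> Tmap \<alpha> \<beta>) p = pbracket f g (Tmap \<alpha> \<beta> p)"
proof -
  let ?T = "Tmap \<alpha> \<beta> p"
  have fX: "dX (f \<circ> Tmap \<alpha> \<beta>) p i = (\<lambda>a. \<Sum>c\<in>UNIV. JUx (fst p $ i) (snd p $ i) (\<alpha>-\<beta>) c a * dX f ?T i c
        + JVx (fst p $ i) (snd p $ i) (\<alpha>-\<beta>) c a * dY f ?T (cpred i) c)" for i
    using dX_comp(1)[OF p f] by auto
  have fY: "dY (f \<circ> Tmap \<alpha> \<beta>) p i = (\<lambda>a. \<Sum>c\<in>UNIV. JUy (fst p $ i) (snd p $ i) (\<alpha>-\<beta>) c a * dX f ?T i c
        + JVy (fst p $ i) (snd p $ i) (\<alpha>-\<beta>) c a * dY f ?T (cpred i) c)" for i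
    using dX_comp(2)[OF p f] by auto
  have gX: "dX (g \<circ> Tmap \<alpha> \<beta>) p i = (\<lambda>a. \<Sum>c\<in>UNIV. JUx (fst p $ i) (snd p $ i) (\<alpha>-\<beta>) c a * dX g ?T i c
        + JVx (fst p $ i) (snd p $ i) (\<alpha>-\<beta>) c a * dY g ?T (cpred i) c)" for i
    using dX_comp(1)[OF p g] by auto
  have gY: "dY (g \<circ> Tmap \<alpha> \<beta>) p i = (\<lambda>a. \<Sum>c\<in>UNIV. JUy (fst p $ i) (snd p $ i) (\<alpha>-\<beta>) c a * dX g ?T i c
        + JVy (fst p $ i) (snd p $ i) (\<alpha>-\<beta>) c a * dY g ?T (cpred i) c)" for i
    using dX_comp(2)[OF p g] by auto
  have uv: "((1 / Dn (fst p $ i) (snd p $ i) (\<alpha>-\<beta>)) *\<^sub>R NU (fst p $ i) (snd p $ i) (\<alpha>-\<beta>)) = fst ?T $ i"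
     "((1 / Dn (fst p $ i) (snd p $ i) (\<alpha>-\<beta>)) *\<^sub>R NV (fst p $ i) (snd p $ i) (\<alpha>-\<beta>)) = snd ?T $ cpred i" for i
    by (simp_all add: Tmap_fst Tmap_snd Rhat_eq generic_Dn[OF p])
  have "pbracket (f \<circ> Tmap \<alpha> \<beta>) (g \<circ> Tmap \<alpha> \<beta>) p
     = (\<Sum>i\<in>UNIV. pb (fst ?T $ i) (snd ?T $ cpred i) (dX f ?T i) (dY f ?T (cpred i)) (dX g ?T i) (dY g ?T (cpred i)))"
    unfolding pbracket_pb fX fY gX gY
    by (simp add: pair_pb generic_Dn[OF p] uv)
  also have "\<dots> = (\<Sum>i\<in>UNIV. pb1 (fst ?T $ i) (dX f ?T i) (dX g ?T i)) + (\<Sum>i\<in>UNIV. pb1 (snd ?T $ cpred i) (dY f ?T (cpred i)) (dY g ?T (cpred i)))"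
    by (simp add: pb_split sum.distrib)
  also have "(\<Sum>i\<in>UNIV. pb1 (snd ?T $ cpred i) (dY f ?T (cpred i)) (dY g ?T (cpred i))) = (\<Sum>i\<in>UNIV. pb1 (snd ?T $ i) (dY f ?T i) (dY g ?T i))"
    using sum_csucc[of "\<lambda>i. pb1 (snd ?T $ cpred i) (dY f ?T (cpred i)) (dY g ?T (cpred i))"] by simp
  also have "(\<Sum>i\<in>UNIV. pb1 (fst ?T $ i) (dX f ?T i) (dX g ?T i)) + (\<Sum>i\<in>UNIV. pb1 (snd ?T $ i) (dY f ?T i) (dY g ?T i)) = pbracket f g ?T"
    by (simp add: pbracket_pb pb_split sum.distrib)
  finally show ?thesis .
qed


lemma casimir_scale: "casimir (r *\<^sub>R z) = r^2 * casimir z"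
  by (simp add: casimir_def algebra_simps power2_eq_square)

lemma casimir_part:
  "\<forall>c \<in> casimir_functions. \<exists>c' \<in> casimir_functions.
        \<forall>p \<in> generic \<alpha> \<beta>. c (Tmap \<alpha> \<beta> (p::'n::{finite,linorder} state)) = c' p"
proof
  fix c :: "'n state \<Rightarrow> real" assume "c \<in> casimir_functions"
  then obtain i where "c = (\<lambda>p. casimir (fst p $ i)) \<or> c = (\<lambda>p. casimir (snd p $ i))"
    unfolding casimir_functions_def by blast
  then show "\<exists>c' \<in> casimir_functions. \<forall>p \<in> generic \<alpha> \<beta>. c (Tmap \<alpha> \<beta> p) = c' p"
  proof
    assume c: "c = (\<lambda>p. casimir (fst p $ i))"
    have "\<forall>p \<in> generic \<alpha> \<beta>. c (Tmap \<alpha> \<beta> p) = casimir (fst p $ i)"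
    proof
      fix p :: "'n state" assume p: "p \<in> generic \<alpha> \<beta>"
      have D: "Dn (fst p $ i) (snd p $ i) (\<alpha>-\<beta>) \<noteq> 0" by (rule generic_Dn[OF p])
      show "c (Tmap \<alpha> \<beta> p) = casimir (fst p $ i)"
        using D by (simp add: c Tmap_def Rhat_eq casimir_scale casimir_NU power2_eq_square)
    qed
    moreover have "(\<lambda>p. casimir (fst p $ i)) \<in> casimir_functions" unfolding casimir_functions_def by blast
    ultimately show ?thesis by (intro bexI[where x="\<lambda>p. casimir (fst p $ i)"]) simp_all
  next
    assume c: "c = (\<lambda>p. casimir (snd p $ i))"
    have "\<forall>p \<in> generic \<alpha> \<beta>. c (Tmap \<alpha> \<beta> p) = casimir (snd p $ csucc i)"
    proof
      fix p :: "'n state" assume p: "p \<in> generic \<alpha> \<beta>"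
      have D: "Dn (fst p $ csucc i) (snd p $ csucc i) (\<alpha>-\<beta>) \<noteq> 0" by (rule generic_Dn[OF p])
      show "c (Tmap \<alpha> \<beta> p) = casimir (snd p $ csucc i)"
        using D by (simp add: c Tmap_def Rhat_eq casimir_scale casimir_NV power2_eq_square)
    qed
    moreover have "(\<lambda>p. casimir (snd p $ csucc i)) \<in> casimir_functions" unfolding casimir_functions_def by blast
    ultimately show ?thesis by (intro bexI[where x="\<lambda>p. casimir (snd p $ csucc i)"]) simp_all
  qed
qed

lemma lin_part: "lin_integral k (Tmap \<alpha> \<beta> (p::'n::{finite,linorder} state)) = lin_integral k p"
proof -
  have "lin_integral k (Tmap \<alpha> \<beta> p) = (\<Sum>i\<in>UNIV. fst (Rhat \<alpha> \<beta> (fst p $ i) (snd p $ i)) $ k)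
      + (\<Sum>i\<in>UNIV. snd (Rhat \<alpha> \<beta> (fst p $ csucc i) (snd p $ csucc i)) $ k)"
    by (simp add: lin_integral_def Tmap_def sum.distrib)
  also have "(\<Sum>i\<in>UNIV. snd (Rhat \<alpha> \<beta> (fst p $ csucc i) (snd p $ csucc i)) $ k)
     = (\<Sum>i\<in>UNIV. snd (Rhat \<alpha> \<beta> (fst p $ i) (snd p $ i)) $ k)"
    by (rule sum_csucc)
  also have "(\<Sum>i\<in>UNIV. fst (Rhat \<alpha> \<beta> (fst p $ i) (snd p $ i)) $ k) + (\<Sum>i\<in>UNIV. snd (Rhat \<alpha> \<beta> (fst p $ i) (snd p $ i)) $ k)
     = (\<Sum>i\<in>UNIV. (fst (Rhat \<alpha> \<beta> (fst p $ i) (snd p $ i)) + snd (Rhat \<alpha> \<beta> (fst p $ i) (snd p $ i))) $ k)"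
    by (simp add: sum.distrib)
  also have "\<dots> = lin_integral k p"
    by (simp add: Rhat_sum lin_integral_def)
  finally show ?thesis .
qed


lemma map_csucc_list:
  defines "l \<equiv> sorted_list_of_set (UNIV :: 'n::{finite,linorder} set)"
  shows "map csucc l = tl l @ [hd l]"
proof -
  have sl: "sorted l" and dl: "distinct l" and setl: "set l = UNIV"
    by (simp_all add: l_def)
  have ne: "l \<noteq> []" using setl by auto
  have hd: "hd l = Min UNIV"
    unfolding l_def using sorted_list_of_set_nonempty[of "UNIV::'n set"] by simp
  let ?n = "length l"
  have inl: "\<exists>m<?n. j = l!m" for j using setl in_set_conv_nth[of j l] by auto
  have mono: "l!a \<le> l!b" if "a \<le> b" "b < ?n" for a b using sorted_nth_mono[OF sl that] .
  have smono: "a < b" if "l!a < l!b" "a < ?n" for a b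
  proof (rule ccontr)
    assume "\<not> a < b"
    then have "b \<le> a" by simp
    then have "l!b \<le> l!a" using mono[of b a] that(2) by simp
    then show False using that(1) by simp
  qed
  show ?thesis
  proof (rule nth_equalityI)
    show "length (map csucc l) = length (tl l @ [hd l])" using ne by simp
    fix k assume "k < length (map csucc l)"
    then have k: "k < ?n" by simp
    show "map csucc l ! k = (tl l @ [hd l]) ! k"
    proof (cases "k + 1 < ?n")
      case True
      have kk: "k < length (tl l)" using True by simp
      have r: "(tl l @ [hd l]) ! k = l ! (k+1)" using kk ne by (simp add: nth_append nth_tl)
      have neq: "l!k \<noteq> l!(k+1)" using dl True k by (simp add: nth_eq_iff_index_eq)
      have "l!k \<le> l!(k+1)" using mono[of k "k+1"] True by simp
      then have lt: "l!k < l!(k+1)" using neq by simp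
      have le1: "csucc (l!k) \<le> l!(k+1)" by (rule csucc_le[OF lt])
      have nm: "l!k \<noteq> Max UNIV" using lt Max_ge[of UNIV "l!(k+1)"] by auto
      have gt: "l!k < csucc (l!k)" by (rule csucc_gt[OF nm])
      obtain m where m: "m < ?n" "csucc (l!k) = l!m" using inl by blast
      have "k < m" using smono[of k m] gt m k by simp
      then have "l!(k+1) \<le> csucc (l!k)" using mono[of "k+1" m] m by simp
      then show ?thesis using le1 r k by simp
    next
      case False
      then have kn: "k = ?n - 1" using k by simp
      have r: "(tl l @ [hd l]) ! k = hd l" using kn ne by (simp add: nth_append)
      have "j \<le> l!k" for j
      proof -
        obtain m where "m < ?n" "j = l!m" using inl by blast
        then show ?thesis using mono[of m k] kn k by simp
      qed
      then have "Max UNIV = l!k" by (intro Max_eqI) auto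
      then have "csucc (l!k) = Min UNIV" by (simp add: csucc_def)
      then show ?thesis using r hd k by simp
    qed
  qed
qed

lemma fold_mult_acc:
  "fold (\<lambda>i A. G i ** A) ys (A ** B) = fold (\<lambda>i A. G i ** A) ys A ** (B :: 'a::semiring_1^'n^'n)"
  by (induction ys arbitrary: A) (simp_all add: matrix_mul_assoc)

lemma fold_shift:
  fixes Lu Lv :: "'i \<Rightarrow> 'a::semiring_1^'n^'n"
  shows "map s (d#ys) = ys @ [c] \<Longrightarrow>
    fold (\<lambda>i A. (Lv (s i) ** Lu i) ** A) (d#ys) X = Lv c ** fold (\<lambda>i A. (Lu i ** Lv i) ** A) ys (Lu d ** X)"
proof (induction ys arbitrary: d X)
  case Nil
  then show ?case by (simp add: matrix_mul_assoc)
next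
  case (Cons e zs)
  then have sd: "s d = e" and ms: "map s (e#zs) = zs @ [c]" by simp_all
  have "fold (\<lambda>i A. (Lv (s i) ** Lu i) ** A) (d#e#zs) X = fold (\<lambda>i A. (Lv (s i) ** Lu i) ** A) (e#zs) ((Lv e ** Lu d) ** X)"
    by (simp add: sd)
  also have "\<dots> = Lv c ** fold (\<lambda>i A. (Lu i ** Lv i) ** A) zs (Lu e ** ((Lv e ** Lu d) ** X))"
    by (rule Cons.IH[OF ms])
  also have "\<dots> = Lv c ** fold (\<lambda>i A. (Lu i ** Lv i) ** A) (e#zs) (Lu d ** X)"
    by (simp add: matrix_mul_assoc)
  finally show ?case .
qed

lemma eig_char:
  fixes A :: "complex^2^2"
  shows "c \<in> eigenvalues A \<longleftrightarrow> (A$0$0 - c) * (A$1$1 - c) = A$0$1 * A$1$0"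
proof
  assume "c \<in> eigenvalues A"
  then obtain v where v: "v \<noteq> 0" "A *v v = c *s v" unfolding eigenvalues_def by blast
  have e0: "(A$0$0 - c) * v$0 + A$0$1 * v$1 = 0" and e1: "A$1$0 * v$0 + (A$1$1 - c) * v$1 = 0"
    using v(2) by (auto simp: vec_eq_iff matrix_vector_mult_def sum2 all2 algebra_simps)
  have nz: "v$0 \<noteq> 0 \<or> v$1 \<noteq> 0" using v(1) by (auto simp: vec_eq_iff all2)
  have "((A$0$0 - c) * (A$1$1 - c) - A$0$1 * A$1$0) * v$0 = 0"
  proof -
    have "((A$0$0 - c) * (A$1$1 - c) - A$0$1 * A$1$0) * v$0 = (A$1$1 - c) * ((A$0$0 - c) * v$0 + A$0$1 * v$1) - A$0$1 * (A$1$0 * v$0 + (A$1$1 - c) * v$1)"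
      by (simp add: algebra_simps)
    then show ?thesis using e0 e1 by simp
  qed
  moreover have "((A$0$0 - c) * (A$1$1 - c) - A$0$1 * A$1$0) * v$1 = 0"
  proof -
    have "((A$0$0 - c) * (A$1$1 - c) - A$0$1 * A$1$0) * v$1 = (A$0$0 - c) * (A$1$0 * v$0 + (A$1$1 - c) * v$1) - A$1$0 * ((A$0$0 - c) * v$0 + A$0$1 * v$1)"
      by (simp add: algebra_simps)
    then show ?thesis using e0 e1 by simp
  qed
  ultimately show "(A$0$0 - c) * (A$1$1 - c) = A$0$1 * A$1$0" using nz by auto
next
  assume det: "(A$0$0 - c) * (A$1$1 - c) = A$0$1 * A$1$0"
  define a where "a = A$0$0 - c"
  define b where "b = A$0$1"
  define d where "d = A$1$0"
  define e where "e = A$1$1 - c"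
  have det': "a * e = b * d" using det by (simp add: a_def b_def d_def e_def)
  have key: "\<exists>v0 v1. (v0 \<noteq> 0 \<or> v1 \<noteq> 0) \<and> a * v0 + b * v1 = 0 \<and> d * v0 + e * v1 = 0"
  proof (cases "a \<noteq> 0 \<or> b \<noteq> 0")
    case True
    then show ?thesis
      by (rule_tac x="-b" in exI, rule_tac x="a" in exI) (auto simp: det' algebra_simps)
  next
    case False
    then have ab: "a = 0" "b = 0" by auto
    show ?thesis
    proof (cases "e \<noteq> 0 \<or> d \<noteq> 0")
      case True
      then show ?thesis using ab
        by (rule_tac x="e" in exI, rule_tac x="-d" in exI) (auto simp: algebra_simps)
    next
      case False
      then show ?thesis using ab by (rule_tac x=1 in exI, rule_tac x=0 in exI) auto
    qed
  qed
  then obtain v0 v1 where vv: "v0 \<noteq> 0 \<or> v1 \<noteq> 0" "a * v0 + b * v1 = 0" "d * v0 + e * v1 = 0" by blast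
  define v :: "complex^2" where "v = (\<chi> i. if i = 0 then v0 else v1)"
  have v01: "v$0 = v0" "v$1 = v1" by (simp_all add: v_def)
  have "v \<noteq> 0"
  proof
    assume "v = 0"
    then have "v$0 = 0" "v$1 = 0" by simp_all
    then show False using vv(1) v01 by simp
  qed
  moreover have "A *v v = c *s v"
    using vv(2,3) by (simp add: vec_eq_iff all2 matrix_vector_mult_def sum2 v_def a_def b_def d_def e_def algebra_simps)
  ultimately show "c \<in> eigenvalues A" unfolding eigenvalues_def by blast
qed

lemma eig_swap: "eigenvalues ((A::complex^2^2) ** B) = eigenvalues (B ** A)"
proof (rule set_eqI)
  fix c
  have d: "((A ** B)$0$0 - c) * ((A ** B)$1$1 - c) - (A ** B)$0$1 * (A ** B)$1$0
      = ((B ** A)$0$0 - c) * ((B ** A)$1$1 - c) - (B ** A)$0$1 * (B ** A)$1$0"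
    by (simp add: matrix_matrix_mult_def sum2) algebra
  show "c \<in> eigenvalues (A ** B) \<longleftrightarrow> c \<in> eigenvalues (B ** A)"
    unfolding eig_char using d by (metis right_minus_eq)
qed

lemma spectrum_part:
  assumes p: "(p::'n::{finite,linorder} state) \<in> generic \<alpha> \<beta>"
  shows "eigenvalues (monodromy \<alpha> \<beta> \<zeta> (Tmap \<alpha> \<beta> p)) = eigenvalues (monodromy \<alpha> \<beta> \<zeta> p)"
proof -
  define l where "l = sorted_list_of_set (UNIV :: 'n set)"
  have "set l = UNIV" by (simp add: l_def)
  then obtain d ys where l: "l = d # ys" by (cases l) auto
  have ms: "map csucc (d # ys) = ys @ [d]" using map_csucc_list[where 'n='n] l by (simp add: l_def[symmetric])
  define Lu where "Lu i = Lmat (fst (Rhat \<alpha> \<beta> (fst p $ i) (snd p $ i))) \<alpha> \<zeta>" for i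
  define Lv where "Lv i = Lmat (snd (Rhat \<alpha> \<beta> (fst p $ i) (snd p $ i))) \<beta> \<zeta>" for i
  have rf: "Lmat (snd p $ i) \<beta> \<zeta> ** Lmat (fst p $ i) \<alpha> \<zeta> = Lu i ** Lv i" for i
    using refact[OF generic_Dn[OF p, of i]] by (simp add: Lu_def Lv_def Rhat_eq[OF generic_Dn[OF p, of i]])
  have "monodromy \<alpha> \<beta> \<zeta> p = fold (\<lambda>i A. (Lu i ** Lv i) ** A) l (mat 1)"
    unfolding monodromy_def l_def[symmetric] by (simp add: rf)
  also have "\<dots> = fold (\<lambda>i A. (Lu i ** Lv i) ** A) ys (Lu d) ** Lv d"
    unfolding l using fold_mult_acc[of "\<lambda>i. Lu i ** Lv i" ys "Lu d" "Lv d"] by simp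
  finally have M1: "monodromy \<alpha> \<beta> \<zeta> p = fold (\<lambda>i A. (Lu i ** Lv i) ** A) ys (Lu d) ** Lv d" .
  have "monodromy \<alpha> \<beta> \<zeta> (Tmap \<alpha> \<beta> p) = fold (\<lambda>i A. (Lv (csucc i) ** Lu i) ** A) l (mat 1)"
    unfolding monodromy_def l_def[symmetric] by (simp add: Tmap_def Lu_def Lv_def)
  also have "\<dots> = Lv d ** fold (\<lambda>i A. (Lu i ** Lv i) ** A) ys (Lu d)"
    unfolding l using fold_shift[OF ms, of Lv Lu "mat 1"] by simp
  finally have M2: "monodromy \<alpha> \<beta> \<zeta> (Tmap \<alpha> \<beta> p) = Lv d ** fold (\<lambda>i A. (Lu i ** Lv i) ** A) ys (Lu d)" .
  show ?thesis unfolding M1 M2 by (rule eig_swap)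
qed


definition prodl :: "(complex^2^2) list \<Rightarrow> complex^2^2" where
  "prodl Fs = fold (\<lambda>F A. F ** A) Fs (mat 1)"

lemma prodl_fold: "fold (\<lambda>F A. F ** A) Fs X = prodl Fs ** (X::complex^2^2)"
proof (induction Fs arbitrary: X)
  case Nil then show ?case by (simp add: prodl_def)
next
  case (Cons a Fs)
  have "fold (\<lambda>F A. F ** A) (a # Fs) X = prodl Fs ** (a ** X)" using Cons by simp
  moreover have "prodl (a # Fs) = prodl Fs ** a"
    using Cons[of "a ** mat 1"] by (simp add: prodl_def)
  ultimately show ?case by (simp add: matrix_mul_assoc)
qed

lemma prodl_Nil[simp]: "prodl [] = mat 1" by (simp add: prodl_def)
lemma prodl_Cons: "prodl (a # xs) = prodl xs ** a"
  using prodl_fold[of xs "a ** mat 1"] by (simp add: prodl_def)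
lemma prodl_append: "prodl (xs @ ys) = prodl ys ** prodl xs"
  using prodl_fold[of ys "prodl xs"] by (simp add: prodl_def)

definition fl :: "('i \<Rightarrow> 'a) \<Rightarrow> ('i \<Rightarrow> 'a) \<Rightarrow> 'i list \<Rightarrow> 'a list" where
  "fl a b xs = concat (map (\<lambda>j. [a j, b j]) xs)"

lemma fl_simps[simp]: "fl a b [] = []" "fl a b (j # xs) = a j # b j # fl a b xs"
  by (simp_all add: fl_def)

lemma length_fl[simp]: "length (fl a b xs) = 2 * length xs"
  by (induction xs) auto

lemma take_fl: "take (2*m) (fl a b xs) = fl a b (take m xs)"
proof (induction xs arbitrary: m)
  case Nil then show ?case by simp
next
  case (Cons j xs)
  show ?case
  proof (cases m)
    case 0 then show ?thesis by simp
  next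
    case (Suc m')
    have "2*m = Suc (Suc (2*m'))" using Suc by simp
    then show ?thesis using Suc Cons.IH[of m'] by simp
  qed
qed

lemma drop_fl: "drop (2*m) (fl a b xs) = fl a b (drop m xs)"
proof (induction xs arbitrary: m)
  case Nil then show ?case by simp
next
  case (Cons j xs)
  show ?case
  proof (cases m)
    case 0 then show ?thesis by simp
  next
    case (Suc m')
    have "2*m = Suc (Suc (2*m'))" using Suc by simp
    then show ?thesis using Suc Cons.IH[of m'] by simp
  qed
qed

lemma nth_fl: "m < length xs \<Longrightarrow> fl a b xs ! (2*m) = a (xs!m) \<and> fl a b xs ! (2*m+1) = b (xs!m)"
proof (induction xs arbitrary: m)
  case Nil then show ?case by simp
next
  case (Cons j xs)
  show ?case
  proof (cases m)
    case 0 then show ?thesis by simp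
  next
    case (Suc m')
    then have "m' < length xs" using Cons.prems by simp
    then have "fl a b xs ! (2*m') = a (xs!m') \<and> fl a b xs ! (2*m'+1) = b (xs!m')" by (rule Cons.IH)
    moreover have "2*m = Suc (Suc (2*m'))" "2*m+1 = Suc (Suc (2*m'+1))" using Suc by simp_all
    ultimately show ?thesis using Suc by simp
  qed
qed

lemma fl_cong: "(\<And>j. j \<in> set xs \<Longrightarrow> a j = a' j \<and> b j = b' j) \<Longrightarrow> fl a b xs = fl a' b' xs"
  by (induction xs) auto

lemma fold_fl: "fold (\<lambda>j A. b j ** a j ** A) xs X = fold (\<lambda>F A. F ** A) (fl a b xs) X"
  by (induction xs arbitrary: X) (simp_all add: matrix_mul_assoc)

lemma tele:
  assumes len: "length Gs = length Fs"
  shows "(\<Sum>k<length Fs.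
      trace (prodl (take k Fs) ** prodl (drop (Suc k) Fs) ** Gs!k ** prodl (take k Gs) ** prodl (drop (Suc k) Gs) ** Fs!k)
    - trace (prodl (take k Fs) ** prodl (drop (Suc k) Fs) ** Fs!k ** prodl (take k Gs) ** prodl (drop (Suc k) Gs) ** Gs!k)) = 0"
proof -
  define H where "H j = trace (prodl (take j Fs) ** prodl (drop j Fs) ** prodl (take j Gs) ** prodl (drop j Gs))" for j
  have step: "trace (prodl (take k Fs) ** prodl (drop (Suc k) Fs) ** Gs!k ** prodl (take k Gs) ** prodl (drop (Suc k) Gs) ** Fs!k)
    - trace (prodl (take k Fs) ** prodl (drop (Suc k) Fs) ** Fs!k ** prodl (take k Gs) ** prodl (drop (Suc k) Gs) ** Gs!k)
    = H (Suc k) - H k" if k: "k < length Fs" for k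
  proof -
    have kG: "k < length Gs" using k len by simp
    have t1: "prodl (take (Suc k) Fs) = Fs!k ** prodl (take k Fs)"
      using k by (simp add: take_Suc_conv_app_nth prodl_append prodl_Cons)
    have t2: "prodl (take (Suc k) Gs) = Gs!k ** prodl (take k Gs)"
      using kG by (simp add: take_Suc_conv_app_nth prodl_append prodl_Cons)
    have d1: "prodl (drop k Fs) = prodl (drop (Suc k) Fs) ** Fs!k"
      using k by (simp add: Cons_nth_drop_Suc[symmetric] prodl_Cons)
    have d2: "prodl (drop k Gs) = prodl (drop (Suc k) Gs) ** Gs!k"
      using kG by (simp add: Cons_nth_drop_Suc[symmetric] prodl_Cons)
    have "H (Suc k) = trace (Fs!k ** (prodl (take k Fs) ** prodl (drop (Suc k) Fs) ** Gs!k ** prodl (take k Gs) ** prodl (drop (Suc k) Gs)))"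
      unfolding H_def t1 t2 by (simp add: matrix_mul_assoc)
    also have "\<dots> = trace (prodl (take k Fs) ** prodl (drop (Suc k) Fs) ** Gs!k ** prodl (take k Gs) ** prodl (drop (Suc k) Gs) ** Fs!k)"
      by (rule trace_mul_sym)
    finally have h1: "H (Suc k) = \<dots>" .
    have h2: "H k = trace (prodl (take k Fs) ** prodl (drop (Suc k) Fs) ** Fs!k ** prodl (take k Gs) ** prodl (drop (Suc k) Gs) ** Gs!k)"
      unfolding H_def d1 d2 by (simp add: matrix_mul_assoc)
    show ?thesis using h1 h2 by simp
  qed
  have "(\<Sum>k<length Fs.
      trace (prodl (take k Fs) ** prodl (drop (Suc k) Fs) ** Gs!k ** prodl (take k Gs) ** prodl (drop (Suc k) Gs) ** Fs!k)
    - trace (prodl (take k Fs) ** prodl (drop (Suc k) Fs) ** Fs!k ** prodl (take k Gs) ** prodl (drop (Suc k) Gs) ** Gs!k))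
    = (\<Sum>k<length Fs. H (Suc k) - H k)"
    by (rule sum.cong) (simp_all add: step)
  also have "\<dots> = H (length Fs) - H 0" by (rule sum_lessThan_telescope)
  also have "\<dots> = 0" using len by (simp add: H_def)
  finally show ?thesis .
qed


lemma Lmat_add: "Lmat (z + w) a \<zeta> = Lmat z a \<zeta> + Lmat w 0 0"
  by (simp add: vec_eq_iff all2 Lmat_def algebra_simps)

lemma Lmat_scale0: "Lmat (r *\<^sub>R w) 0 0 = r *\<^sub>R Lmat w 0 0"
  by (simp add: vec_eq_iff all2 Lmat_def complex_eq_iff algebra_simps)

lemma Lmat_plus0: "Lmat (u + w) 0 0 = Lmat u 0 0 + Lmat w 0 0"
  by (simp add: Lmat_add)

lemma mm_scaleR_right: "(x::complex^2^2) ** (r *\<^sub>R y) = r *\<^sub>R (x ** y)"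
  by (simp add: vec_eq_iff matrix_matrix_mult_def scaleR_sum_right)
lemma mm_scaleR_left: "(r *\<^sub>R x) ** (y::complex^2^2) = r *\<^sub>R (x ** y)"
  by (simp add: vec_eq_iff matrix_matrix_mult_def scaleR_sum_right)

lemma mm_add_rdistrib: "((B::complex^2^2) + C) ** A = B ** A + C ** A"
  by (simp add: vec_eq_iff matrix_matrix_mult_def sum.distrib[symmetric] distrib_right)

lemma bb_mm: "bounded_bilinear ((**) :: complex^2^2 \<Rightarrow> complex^2^2 \<Rightarrow> complex^2^2)"
proof -
  have "bilinear ((**) :: complex^2^2 \<Rightarrow> complex^2^2 \<Rightarrow> complex^2^2)"
    unfolding bilinear_def
    by (intro conjI allI linearI) (simp_all add: matrix_add_ldistrib mm_add_rdistrib mm_scaleR_right mm_scaleR_left)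
  then show ?thesis by (simp add: bilinear_conv_bounded_bilinear)
qed

lemma diff_mm:
  fixes f g :: "'a::real_normed_vector \<Rightarrow> complex^2^2"
  assumes "f differentiable (at p)" "g differentiable (at p)"
  shows "(\<lambda>q. (f q :: complex^2^2) ** g q) differentiable (at p)"
proof -
  obtain f' g' where fd: "(f has_derivative f') (at p)" and gd: "(g has_derivative g') (at p)"
    using assms unfolding differentiable_def by blast
  show ?thesis unfolding differentiable_def
    using bounded_bilinear.FDERIV[OF bb_mm fd gd] by blast
qed

lemma diff_Lx: "(\<lambda>q::'n::finite state. Lmat (fst q $ j) a \<zeta>) differentiable (at p)"
proof -
  have w: "Lmat w a \<zeta> = Lmat 0 a \<zeta> + Lmat w 0 0" for w
    using Lmat_add[of 0 w a \<zeta>] by (simp only: add_0_left)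
  have e: "(\<lambda>q::'n state. Lmat (fst q $ j) a \<zeta>) = (\<lambda>q. Lmat 0 a \<zeta> + Lmat (fst q $ j) 0 0)"
    by (rule ext) (rule w)
  have "linear (\<lambda>q::'n state. Lmat (fst q $ j) 0 0)"
    by (intro linearI) (simp_all add: Lmat_plus0 Lmat_scale0)
  then have "(\<lambda>q::'n state. Lmat (fst q $ j) 0 0) differentiable (at p)"
    by (simp add: linear_conv_bounded_linear bounded_linear_imp_differentiable)
  then show ?thesis unfolding e by simp
qed

lemma diff_Ly: "(\<lambda>q::'n::finite state. Lmat (snd q $ j) a \<zeta>) differentiable (at p)"
proof -
  have w: "Lmat w a \<zeta> = Lmat 0 a \<zeta> + Lmat w 0 0" for w
    using Lmat_add[of 0 w a \<zeta>] by (simp only: add_0_left)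
  have e: "(\<lambda>q::'n state. Lmat (snd q $ j) a \<zeta>) = (\<lambda>q. Lmat 0 a \<zeta> + Lmat (snd q $ j) 0 0)"
    by (rule ext) (rule w)
  have "linear (\<lambda>q::'n state. Lmat (snd q $ j) 0 0)"
    by (intro linearI) (simp_all add: Lmat_plus0 Lmat_scale0)
  then have "(\<lambda>q::'n state. Lmat (snd q $ j) 0 0) differentiable (at p)"
    by (simp add: linear_conv_bounded_linear bounded_linear_imp_differentiable)
  then show ?thesis unfolding e by simp
qed

lemma diff_fold:
  fixes X :: "'n::finite state \<Rightarrow> complex^2^2"
  shows "X differentiable (at p) \<Longrightarrow>
   (\<lambda>q::'n::finite state. fold (\<lambda>i A. Lmat (snd q $ i) \<beta> \<zeta> ** Lmat (fst q $ i) \<alpha> \<zeta> ** A) xs (X q)) differentiable (at p)"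
proof (induction xs arbitrary: X)
  case Nil then show ?case by simp
next
  case (Cons j xs)
  have "(\<lambda>q. Lmat (snd q $ j) \<beta> \<zeta> ** Lmat (fst q $ j) \<alpha> \<zeta> ** X q) differentiable (at p)"
    apply (rule diff_mm)
     apply (rule diff_mm)
      apply (rule diff_Ly)
     apply (rule diff_Lx)
    apply (rule Cons.prems)
    done
  then show ?case using Cons.IH by simp
qed

lemma linear_trace: "linear (trace :: complex^2^2 \<Rightarrow> complex)"
  by (intro linearI) (simp_all add: trace_def sum.distrib scaleR_sum_right)

lemma diff_trmono: "(\<lambda>q::'n::{finite,linorder} state. trace (monodromy \<alpha> \<beta> \<zeta> q)) differentiable (at p)"
proof -
  have "(\<lambda>q::'n state. monodromy \<alpha> \<beta> \<zeta> q) differentiable (at p)"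
    unfolding monodromy_def by (rule diff_fold) simp
  then obtain M' where "((\<lambda>q::'n state. monodromy \<alpha> \<beta> \<zeta> q) has_derivative M') (at p)"
    unfolding differentiable_def by blast
  moreover have "bounded_linear (trace :: complex^2^2 \<Rightarrow> complex)"
    using linear_trace by (simp add: linear_conv_bounded_linear)
  ultimately show ?thesis unfolding differentiable_def
    using bounded_linear.has_derivative[of trace] by blast
qed


lemma deriv_affine:
  fixes f :: "'a::real_normed_vector \<Rightarrow> 'b::real_normed_vector"
  assumes d: "f differentiable (at p)" and aff: "\<And>t. f (p + t *\<^sub>R e) = f p + t *\<^sub>R c"
  shows "frechet_derivative f (at p) e = c"
proof -
  let ?F = "frechet_derivative f (at p)"
  have fd: "(f has_derivative ?F) (at p)" using d by (rule frechet_derivative_works[THEN iffD1])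
  have gd: "((\<lambda>t::real. p + t *\<^sub>R e) has_derivative (\<lambda>t. t *\<^sub>R e)) (at 0)"
    by (auto intro!: derivative_eq_intros)
  have fd': "(f has_derivative ?F) (at ((\<lambda>t::real. p + t *\<^sub>R e) 0))" using fd by simp
  have "((f \<circ> (\<lambda>t::real. p + t *\<^sub>R e)) has_derivative (?F \<circ> (\<lambda>t. t *\<^sub>R e))) (at 0)"
    by (rule diff_chain_at[OF gd fd'])
  moreover have "(f \<circ> (\<lambda>t::real. p + t *\<^sub>R e)) = (\<lambda>t. f p + t *\<^sub>R c)" by (simp add: fun_eq_iff aff)
  ultimately have h1: "((\<lambda>t. f p + t *\<^sub>R c) has_derivative (?F \<circ> (\<lambda>t. t *\<^sub>R e))) (at (0::real))" by simp
  have h2: "((\<lambda>t. f p + t *\<^sub>R c) has_derivative (\<lambda>t. t *\<^sub>R c)) (at (0::real))"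
    by (auto intro!: derivative_eq_intros)
  have eq: "(?F \<circ> (\<lambda>t. t *\<^sub>R e)) = (\<lambda>t. t *\<^sub>R c)" by (rule has_derivative_unique[OF h1 h2])
  have "?F (1 *\<^sub>R e) = 1 *\<^sub>R c" using fun_cong[OF eq, of 1] by (simp only: o_def)
  then show ?thesis by simp
qed

lemma perturb:
  assumes len: "length As = length Bs" and k: "k < length Bs"
    and tk: "take k As = take k Bs" and dr: "drop (Suc k) As = drop (Suc k) Bs"
    and nk: "As!k = Bs!k + t *\<^sub>R E"
  shows "trace (prodl As) = trace (prodl Bs) + t *\<^sub>R trace (prodl (take k Bs) ** prodl (drop (Suc k) Bs) ** E)"
proof -
  have kA: "k < length As" using k len by simp
  have A: "prodl As = prodl (drop (Suc k) Bs) ** (Bs!k + t *\<^sub>R E) ** prodl (take k Bs)"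
    using id_take_nth_drop[OF kA] tk dr nk by (metis prodl_Cons prodl_append)
  have B: "prodl Bs = prodl (drop (Suc k) Bs) ** Bs!k ** prodl (take k Bs)"
    using id_take_nth_drop[OF k] by (metis prodl_Cons prodl_append)
  have "prodl As = prodl Bs + t *\<^sub>R (prodl (drop (Suc k) Bs) ** E ** prodl (take k Bs))"
    unfolding A B by (simp add: matrix_add_ldistrib mm_add_rdistrib mm_scaleR_right mm_scaleR_left)
  then have "trace (prodl As) = trace (prodl Bs) + t *\<^sub>R trace (prodl (drop (Suc k) Bs) ** E ** prodl (take k Bs))"
    using linear_trace by (simp add: linear_add linear_scale)
  also have "trace (prodl (drop (Suc k) Bs) ** E ** prodl (take k Bs)) = trace (prodl (take k Bs) ** prodl (drop (Suc k) Bs) ** E)"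
    using trace_mul_sym[of "prodl (drop (Suc k) Bs) ** E" "prodl (take k Bs)"] by (simp add: matrix_mul_assoc)
  finally show ?thesis .
qed

lemma fl_local:
  assumes dist: "distinct xs" and m: "m < length xs"
    and same: "\<And>j. j \<noteq> xs!m \<Longrightarrow> a' j = a j \<and> b' j = b j"
  shows "take (2*m) (fl a' b' xs) = take (2*m) (fl a b xs)"
    and "drop (2*m+2) (fl a' b' xs) = drop (2*m+2) (fl a b xs)"
proof -
  have split: "xs = take m xs @ xs!m # drop (Suc m) xs" by (rule id_take_nth_drop[OF m])
  have d2: "distinct (take m xs @ xs!m # drop (Suc m) xs)" using dist split by simp
  have n1: "xs!m \<notin> set (take m xs)" and n2: "xs!m \<notin> set (drop (Suc m) xs)"
    using d2 by auto
  show "take (2*m) (fl a' b' xs) = take (2*m) (fl a b xs)"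
    unfolding take_fl by (rule fl_cong) (metis n1 same)
  have e: "2*m+2 = 2*(Suc m)" by simp
  show "drop (2*m+2) (fl a' b' xs) = drop (2*m+2) (fl a b xs)"
    unfolding e drop_fl by (rule fl_cong) (metis n2 same)
qed


definition Fsl :: "real \<Rightarrow> real \<Rightarrow> complex \<Rightarrow> 'n::finite state \<Rightarrow> 'n list \<Rightarrow> (complex^2^2) list" where
  "Fsl \<alpha> \<beta> \<zeta> q xs = fl (\<lambda>j. Lmat (fst q $ j) \<alpha> \<zeta>) (\<lambda>j. Lmat (snd q $ j) \<beta> \<zeta>) xs"

definition Emat :: "3 \<Rightarrow> complex^2^2" where "Emat a = Lmat (e3 a) 0 0"

lemma mono_prodl: "monodromy \<alpha> \<beta> \<zeta> q = prodl (Fsl \<alpha> \<beta> \<zeta> q (sorted_list_of_set (UNIV::'n::{finite,linorder} set)))"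
  unfolding monodromy_def Fsl_def fold_fl prodl_fold by simp

lemma Lmat_pert: "Lmat (z + t *\<^sub>R e3 a) c \<zeta> = Lmat z c \<zeta> + t *\<^sub>R Emat a"
  by (simp add: Lmat_add Lmat_scale0 Emat_def)

lemma dX_tr:
  fixes p :: "'n::{finite,linorder} state"
  defines "l \<equiv> sorted_list_of_set (UNIV::'n set)"
  assumes m: "m < length l"
  shows "dX (\<lambda>q. trace (monodromy \<alpha> \<beta> \<zeta> q)) p (l!m) a
     = trace (prodl (take (2*m) (Fsl \<alpha> \<beta> \<zeta> p l)) ** prodl (drop (Suc (2*m)) (Fsl \<alpha> \<beta> \<zeta> p l)) ** Emat a)"
proof -
  let ?i = "l!m"
  let ?e = "(axis ?i (e3 a), 0) :: 'n state"
  have dist: "distinct l" by (simp add: l_def)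
  show ?thesis
    unfolding dX_def
  proof (rule deriv_affine[OF diff_trmono])
    fix t :: real
    let ?As = "Fsl \<alpha> \<beta> \<zeta> (p + t *\<^sub>R ?e) l" and ?Bs = "Fsl \<alpha> \<beta> \<zeta> p l"
    have same: "\<And>j. j \<noteq> l!m \<Longrightarrow> Lmat (fst (p + t *\<^sub>R ?e) $ j) \<alpha> \<zeta> = Lmat (fst p $ j) \<alpha> \<zeta> \<and>
                     Lmat (snd (p + t *\<^sub>R ?e) $ j) \<beta> \<zeta> = Lmat (snd p $ j) \<beta> \<zeta>"
      by (simp add: axis_def)
    have tk: "take (2*m) ?As = take (2*m) ?Bs" and dk: "drop (2*m+2) ?As = drop (2*m+2) ?Bs"
      unfolding Fsl_def using fl_local[OF dist m same] by auto
    have nA: "?As ! (2*m) = Lmat (fst (p + t *\<^sub>R ?e) $ ?i) \<alpha> \<zeta>" "?As ! (2*m+1) = Lmat (snd (p + t *\<^sub>R ?e) $ ?i) \<beta> \<zeta>"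
      unfolding Fsl_def by (rule nth_fl[OF m, THEN conjunct1], rule nth_fl[OF m, THEN conjunct2])
    have nB: "?Bs ! (2*m) = Lmat (fst p $ ?i) \<alpha> \<zeta>" "?Bs ! (2*m+1) = Lmat (snd p $ ?i) \<beta> \<zeta>"
      unfolding Fsl_def by (rule nth_fl[OF m, THEN conjunct1], rule nth_fl[OF m, THEN conjunct2])
    have n1: "?As ! (2*m+1) = ?Bs ! (2*m+1)" using nA(2) nB(2) by simp
    have n0: "?As ! (2*m) = ?Bs ! (2*m) + t *\<^sub>R Emat a"
      using nA(1) nB(1) by (simp add: Lmat_pert)
    have lenA: "length ?As = 2 * length l" and lenB: "length ?Bs = 2 * length l" by (simp_all add: Fsl_def)
    have dr: "drop (Suc (2*m)) ?As = drop (Suc (2*m)) ?Bs"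
    proof -
      have "Suc (2*m) < length ?As" "Suc (2*m) < length ?Bs" using m lenA lenB by simp_all
      then have "drop (Suc (2*m)) ?As = ?As ! (2*m+1) # drop (2*m+2) ?As"
         "drop (Suc (2*m)) ?Bs = ?Bs ! (2*m+1) # drop (2*m+2) ?Bs"
        by (simp_all add: Cons_nth_drop_Suc[symmetric])
      then show ?thesis using n1 dk by simp
    qed
    have "trace (prodl ?As) = trace (prodl ?Bs) + t *\<^sub>R trace (prodl (take (2*m) ?Bs) ** prodl (drop (Suc (2*m)) ?Bs) ** Emat a)"
      by (rule perturb) (use lenA lenB m tk dr n0 in simp_all)
    then show "trace (monodromy \<alpha> \<beta> \<zeta> (p + t *\<^sub>R ?e)) = trace (monodromy \<alpha> \<beta> \<zeta> p)
        + t *\<^sub>R trace (prodl (take (2*m) ?Bs) ** prodl (drop (Suc (2*m)) ?Bs) ** Emat a)"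
      by (simp add: mono_prodl l_def)
  qed
qed

lemma dY_tr:
  fixes p :: "'n::{finite,linorder} state"
  defines "l \<equiv> sorted_list_of_set (UNIV::'n set)"
  assumes m: "m < length l"
  shows "dY (\<lambda>q. trace (monodromy \<alpha> \<beta> \<zeta> q)) p (l!m) a
     = trace (prodl (take (2*m+1) (Fsl \<alpha> \<beta> \<zeta> p l)) ** prodl (drop (Suc (2*m+1)) (Fsl \<alpha> \<beta> \<zeta> p l)) ** Emat a)"
proof -
  let ?i = "l!m"
  let ?e = "(0, axis ?i (e3 a)) :: 'n state"
  have dist: "distinct l" by (simp add: l_def)
  show ?thesis
    unfolding dY_def
  proof (rule deriv_affine[OF diff_trmono])
    fix t :: real
    let ?As = "Fsl \<alpha> \<beta> \<zeta> (p + t *\<^sub>R ?e) l" and ?Bs = "Fsl \<alpha> \<beta> \<zeta> p l"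
    have same: "\<And>j. j \<noteq> l!m \<Longrightarrow> Lmat (fst (p + t *\<^sub>R ?e) $ j) \<alpha> \<zeta> = Lmat (fst p $ j) \<alpha> \<zeta> \<and>
                     Lmat (snd (p + t *\<^sub>R ?e) $ j) \<beta> \<zeta> = Lmat (snd p $ j) \<beta> \<zeta>"
      by (simp add: axis_def)
    have tk: "take (2*m) ?As = take (2*m) ?Bs" and dk: "drop (2*m+2) ?As = drop (2*m+2) ?Bs"
      unfolding Fsl_def using fl_local[OF dist m same] by auto
    have nA: "?As ! (2*m) = Lmat (fst (p + t *\<^sub>R ?e) $ ?i) \<alpha> \<zeta>" "?As ! (2*m+1) = Lmat (snd (p + t *\<^sub>R ?e) $ ?i) \<beta> \<zeta>"
      unfolding Fsl_def by (rule nth_fl[OF m, THEN conjunct1], rule nth_fl[OF m, THEN conjunct2])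
    have nB: "?Bs ! (2*m) = Lmat (fst p $ ?i) \<alpha> \<zeta>" "?Bs ! (2*m+1) = Lmat (snd p $ ?i) \<beta> \<zeta>"
      unfolding Fsl_def by (rule nth_fl[OF m, THEN conjunct1], rule nth_fl[OF m, THEN conjunct2])
    have n0: "?As ! (2*m) = ?Bs ! (2*m)" using nA(1) nB(1) by simp
    have n1: "?As ! (2*m+1) = ?Bs ! (2*m+1) + t *\<^sub>R Emat a"
      using nA(2) nB(2) by (simp add: Lmat_pert)
    have lenA: "length ?As = 2 * length l" and lenB: "length ?Bs = 2 * length l" by (simp_all add: Fsl_def)
    have tk1: "take (2*m+1) ?As = take (2*m+1) ?Bs"
    proof -
      have "2*m < length ?As" "2*m < length ?Bs" using m lenA lenB by simp_all
      then have "take (Suc (2*m)) ?As = take (2*m) ?As @ [?As ! (2*m)]"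
         "take (Suc (2*m)) ?Bs = take (2*m) ?Bs @ [?Bs ! (2*m)]"
        by (simp_all add: take_Suc_conv_app_nth)
      then show ?thesis using n0 tk by simp
    qed
    have dr: "drop (Suc (2*m+1)) ?As = drop (Suc (2*m+1)) ?Bs" using dk by simp
    have "trace (prodl ?As) = trace (prodl ?Bs) + t *\<^sub>R trace (prodl (take (2*m+1) ?Bs) ** prodl (drop (Suc (2*m+1)) ?Bs) ** Emat a)"
      by (rule perturb) (use lenA lenB m tk1 dr n1 in simp_all)
    then show "trace (monodromy \<alpha> \<beta> \<zeta> (p + t *\<^sub>R ?e)) = trace (monodromy \<alpha> \<beta> \<zeta> p)
        + t *\<^sub>R trace (prodl (take (2*m+1) ?Bs) ** prodl (drop (Suc (2*m+1)) ?Bs) ** Emat a)"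
      by (simp add: mono_prodl l_def)
  qed
qed


lemma Emat_simps:
  "Emat 0 = (\<chi> r c. if r = 0 \<and> c = 0 then 0 else if r = 0 \<and> c = 1 then 1 else if r = 1 \<and> c = 0 then 1 else 0)"
  "Emat 1 = (\<chi> r c. if r = 0 \<and> c = 0 then 0 else if r = 0 \<and> c = 1 then 1 else if r = 1 \<and> c = 0 then -1 else 0)"
  "Emat 2 = (\<chi> r c. if r = 0 \<and> c = 0 then \<i> else if r = 0 \<and> c = 1 then 0 else if r = 1 \<and> c = 0 then 0 else -\<i>)"
  by (simp_all add: Emat_def Lmat_def axis_def vec_eq_iff all2)

lemma local_id:
  fixes X Y :: "complex^2^2"
  shows "(\<zeta> - \<eta>) * (\<Sum>a\<in>UNIV. \<Sum>b\<in>UNIV. Jst z a b *\<^sub>R (trace (X ** Emat a) * trace (Y ** Emat b)))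
   = \<i> * (trace (X ** Lmat z c \<eta> ** Y ** Lmat z c \<zeta>) - trace (X ** Lmat z c \<zeta> ** Y ** Lmat z c \<eta>))"
proof -
  have ii: "\<i> * \<i> = (-1::complex)" by simp
  show ?thesis
    apply (simp add: sum3 sum2 Jst_def trace_def matrix_matrix_mult_def Emat_simps Lmat_def scaleR_conv_of_real)
    using ii apply algebra
    done
qed


lemma sum_pairs: "(\<Sum>m<(n::nat). g (2*m) + g (2*m+1)) = (\<Sum>k<2*n. (g k :: 'a::comm_monoid_add))"
proof (induction n)
  case 0 then show ?case by simp
next
  case (Suc n)
  have "2 * Suc n = Suc (Suc (2*n))" by simp
  then show ?case using Suc by (simp add: add.assoc)
qed

lemma antisym_zero: "(\<Sum>a\<in>UNIV. \<Sum>b\<in>UNIV. Jst z a b *\<^sub>R (F a * F b)) = (0::complex)"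
  by (simp add: sum3 Jst_def algebra_simps)

lemma trace_invol:
  fixes p :: "'n::{finite,linorder} state"
  shows "pbracket (\<lambda>p. trace (monodromy \<alpha> \<beta> \<zeta> p)) (\<lambda>p. trace (monodromy \<alpha> \<beta> \<eta> p)) p = 0"
proof (cases "\<zeta> = \<eta>")
  case True
  then show ?thesis by (simp add: pbracket_def sum.distrib antisym_zero)
next
  case False
  define l where "l = sorted_list_of_set (UNIV::'n set)"
  define f where "f = (\<lambda>p::'n state. trace (monodromy \<alpha> \<beta> \<zeta> p))"
  define g where "g = (\<lambda>p::'n state. trace (monodromy \<alpha> \<beta> \<eta> p))"
  define Fs where "Fs = Fsl \<alpha> \<beta> \<zeta> p l"
  define Gs where "Gs = Fsl \<alpha> \<beta> \<eta> p l"
  define tm where "tm k = trace (prodl (take k Fs) ** prodl (drop (Suc k) Fs) ** Gs!k ** prodl (take k Gs) ** prodl (drop (Suc k) Gs) ** Fs!k)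
    - trace (prodl (take k Fs) ** prodl (drop (Suc k) Fs) ** Fs!k ** prodl (take k Gs) ** prodl (drop (Suc k) Gs) ** Gs!k)" for k
  define h where "h i = (\<zeta> - \<eta>) * (\<Sum>a\<in>UNIV. \<Sum>b\<in>UNIV. Jst (fst p $ i) a b *\<^sub>R (dX f p i a * dX g p i b))
     + (\<zeta> - \<eta>) * (\<Sum>a\<in>UNIV. \<Sum>b\<in>UNIV. Jst (snd p $ i) a b *\<^sub>R (dY f p i a * dY g p i b))" for i
  have dist: "distinct l" and setl: "set l = UNIV" by (simp_all add: l_def)
  have lenF: "length Fs = 2 * length l" and lenG: "length Gs = 2 * length l" by (simp_all add: Fs_def Gs_def Fsl_def)
  have hm: "h (l!m) = \<i> * (tm (2*m) + tm (2*m+1))" if m: "m < length l" for m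
  proof -
    have fx: "Fs!(2*m) = Lmat (fst p $ (l!m)) \<alpha> \<zeta>" "Fs!(2*m+1) = Lmat (snd p $ (l!m)) \<beta> \<zeta>"
      unfolding Fs_def Fsl_def by (rule nth_fl[OF m, THEN conjunct1], rule nth_fl[OF m, THEN conjunct2])
    have gx: "Gs!(2*m) = Lmat (fst p $ (l!m)) \<alpha> \<eta>" "Gs!(2*m+1) = Lmat (snd p $ (l!m)) \<beta> \<eta>"
      unfolding Gs_def Fsl_def by (rule nth_fl[OF m, THEN conjunct1], rule nth_fl[OF m, THEN conjunct2])
    have dXf: "dX f p (l!m) a = trace ((prodl (take (2*m) Fs) ** prodl (drop (Suc (2*m)) Fs)) ** Emat a)" for a
      unfolding f_def Fs_def using dX_tr[OF m[unfolded l_def]] by (simp add: l_def)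
    have dXg: "dX g p (l!m) a = trace ((prodl (take (2*m) Gs) ** prodl (drop (Suc (2*m)) Gs)) ** Emat a)" for a
      unfolding g_def Gs_def using dX_tr[OF m[unfolded l_def]] by (simp add: l_def)
    have dYf: "dY f p (l!m) a = trace ((prodl (take (2*m+1) Fs) ** prodl (drop (Suc (2*m+1)) Fs)) ** Emat a)" for a
      unfolding f_def Fs_def using dY_tr[OF m[unfolded l_def]] by (simp add: l_def)
    have dYg: "dY g p (l!m) a = trace ((prodl (take (2*m+1) Gs) ** prodl (drop (Suc (2*m+1)) Gs)) ** Emat a)" for a
      unfolding g_def Gs_def using dY_tr[OF m[unfolded l_def]] by (simp add: l_def)
    have t1: "(\<zeta> - \<eta>) * (\<Sum>a\<in>UNIV. \<Sum>b\<in>UNIV. Jst (fst p $ (l!m)) a b *\<^sub>R (dX f p (l!m) a * dX g p (l!m) b)) = \<i> * tm (2*m)"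
      unfolding dXf dXg
      apply (subst local_id[where c=\<alpha> and z="fst p $ (l!m)"])
      unfolding tm_def fx gx by (simp add: matrix_mul_assoc)
    have t2: "(\<zeta> - \<eta>) * (\<Sum>a\<in>UNIV. \<Sum>b\<in>UNIV. Jst (snd p $ (l!m)) a b *\<^sub>R (dY f p (l!m) a * dY g p (l!m) b)) = \<i> * tm (2*m+1)"
      unfolding dYf dYg
      apply (subst local_id[where c=\<beta> and z="snd p $ (l!m)"])
      unfolding tm_def fx gx by (simp add: matrix_mul_assoc)
    show ?thesis unfolding h_def t1 t2 by (simp add: distrib_left)
  qed
  have "(\<zeta> - \<eta>) * pbracket f g p = (\<Sum>i\<in>UNIV. h i)"
    by (simp add: pbracket_def h_def sum_distrib_left sum.distrib distrib_left)
  also have "\<dots> = (\<Sum>m<length l. h (l!m))"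
    using sum.reindex_bij_betw[OF bij_betw_nth[OF dist refl refl], of h] setl by simp
  also have "\<dots> = (\<Sum>m<length l. \<i> * (tm (2*m) + tm (2*m+1)))"
    by (rule sum.cong) (simp_all add: hm)
  also have "\<dots> = \<i> * (\<Sum>m<length l. tm (2*m) + tm (2*m+1))"
    by (simp only: sum_distrib_left)
  also have "\<dots> = \<i> * (\<Sum>k<2 * length l. tm k)"
    by (simp only: sum_pairs)
  also have "(\<Sum>k<2 * length l. tm k) = 0"
    using tele[of Gs Fs] lenF lenG by (simp add: tm_def)
  finally have "(\<zeta> - \<eta>) * pbracket f g p = 0" by simp
  then show ?thesis using False by (simp add: f_def g_def)
qed


theorem proposition4p2:
  fixes \<alpha> \<beta> :: real
  defines "T \<equiv> (Tmap \<alpha> \<beta> :: 'n::{finite,linorder} state \<Rightarrow> 'n state)"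
  shows
    \<comment> \<open>Poisson map\<close>
    "(\<forall>p \<in> generic \<alpha> \<beta>. \<forall>f g :: 'n state \<Rightarrow> real.
        f differentiable (at (T p)) \<and> g differentiable (at (T p)) \<longrightarrow>
        pbracket (f \<circ> T) (g \<circ> T) p = pbracket f g (T p))
   \<and> \<comment> \<open>spectrum of the monodromy matrix\<close>
     (\<forall>p \<in> generic \<alpha> \<beta>. \<forall>\<zeta>.
        eigenvalues (monodromy \<alpha> \<beta> \<zeta> (T p)) = eigenvalues (monodromy \<alpha> \<beta> \<zeta> p))
   \<and> \<comment> \<open>Casimirs: the pull-back of each Casimir is again one of the 2n Casimirs\<close>
     (\<forall>c \<in> casimir_functions. \<exists>c' \<in> casimir_functions.
        \<forall>p \<in> generic \<alpha> \<beta>. c (T p) = c' p)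
   \<and> \<comment> \<open>linear integrals\<close>
     (\<forall>k p. p \<in> generic \<alpha> \<beta> \<longrightarrow> lin_integral k (T p) = lin_integral k p)
   \<and> \<comment> \<open>involutivity of the trace\<close>
     (\<forall>\<zeta> \<eta> (p :: 'n state).
        pbracket (\<lambda>p. trace (monodromy \<alpha> \<beta> \<zeta> p)) (\<lambda>p. trace (monodromy \<alpha> \<beta> \<eta> p)) p = 0)"
  proof -
  have A: "\<forall>p \<in> generic \<alpha> \<beta>. \<forall>f g :: 'n state \<Rightarrow> real.
        f differentiable (at (T p)) \<and> g differentiable (at (T p)) \<longrightarrow>
        pbracket (f \<circ> T) (g \<circ> T) p = pbracket f g (T p)"
    unfolding T_def using poisson_map by blast
  have B: "\<forall>p \<in> generic \<alpha> \<beta>. \<forall>\<zeta>.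
        eigenvalues (monodromy \<alpha> \<beta> \<zeta> (T p)) = eigenvalues (monodromy \<alpha> \<beta> \<zeta> p)"
    unfolding T_def using spectrum_part by blast
  have C: "\<forall>c \<in> casimir_functions. \<exists>c' \<in> casimir_functions.
        \<forall>p \<in> generic \<alpha> \<beta>. c (T p) = c' p"
    unfolding T_def by (rule casimir_part)
  have D: "\<forall>k p. p \<in> generic \<alpha> \<beta> \<longrightarrow> lin_integral k (T p) = lin_integral k p"
    unfolding T_def using lin_part by blast
  have E: "\<forall>\<zeta> \<eta> (p :: 'n state).
        pbracket (\<lambda>p. trace (monodromy \<alpha> \<beta> \<zeta> p)) (\<lambda>p. trace (monodromy \<alpha> \<beta> \<eta> p)) p = 0"
    using trace_invol by blast
  show ?thesis using A B C D E by blast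
qed

end
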